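(* Consider the problem $\min_x f(x)=\frac1n\sum_{i=1}^n f_i(x)$ with $f$ $\mu$-strongly convex and unique minimizer $x^*$, run Algorithm BL1 (described in the context), and suppose the constants $H,H_1,M_1,M_2,R$ of the context satisfy the stated inequalities. (i) Suppose each $\mathcal{Q}^k$ is an unbiased compressor with parameter $\omega_{\rm M}$, $0<\eta\le1/(\omega_{\rm M}+1)$; for all $j\in[d]$ and $k\ge0$, $(z^k)_j$ is a convex combination of $\{(x^t)_j\}_{t=0}^k$; and for all $i\in[n]$, $j,l\in[d]$, $k\ge0$, $(\mathbf{L}_i^k)_{jl}$ is a convex combination of $\{h^i(\nabla^2f_i(z^t))_{jl}\}_{t=0}^k$. If $\|x^0-x^*\|^2\le\tilde c_1:=\min\left\{\frac{\mu^2}{4d^2H^2},\frac{\mu^2}{16d^4N_{\rm B}R^2M_2^2}\right\}$, then $\|z^k-x^*\|^2\le d\,\tilde c_1$ and $\mathcal{H}^k\le\frac{\mu^2}{16dN_{\rm B}R^2}$ for all $k\ge0$. (ii) Suppose each $\mathcal{Q}^k$ is a deterministic contraction compressor with parameter $\delta_{\rm M}$ and $\eta=1$, and each $\mathcal{C}_i^k$ is a deterministic contraction compressor with parameter $\delta$ and $\alpha=1$; set $(A_{\rm M},B_{\rm M}):=(\delta_{\rm M}/4,6/\delta_{\rm M}-7/2)$ and $(A,B):=(\delta/4,6/\delta-7/2)$. If $\|z^0-x^*\|^2\le\tilde c_2:=\min\left\{\frac{A_{\rm M}\mu^2}{4H^2B_{\rm M}},\frac{AA_{\rm M}\mu^2}{16N_{\rm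 B}R^2B_{\rm M}BM_1^2}\right\}$ and $\mathcal{H}^0\le\frac{A_{\rm M}\mu^2}{16N_{\rm B}R^2B_{\rm M}}$, then $\|z^k-x^*\|^2\le\tilde c_2$ and $\mathcal{H}^k\le\frac{A_{\rm M}\mu^2}{16N_{\rm B}R^2B_{\rm M}}$ for all $k\ge0$.
   Context: Compressors: a randomized map on $\mathbb{R}^{d\times d}$ (or $\mathbb{R}^d$) is unbiased with parameter $\omega\ge0$ if $\mathbb{E}\mathcal{C}(\mathbf{A})=\mathbf{A}$ and $\mathbb{E}\|\mathcal{C}(\mathbf{A})\|_{\rm F}^2\le(\omega+1)\|\mathbf{A}\|_{\rm F}^2$; a contraction compressor with parameter $\delta\in(0,1]$ if $\mathbb{E}\|\mathbf{A}-\mathcal{C}(\mathbf{A})\|_{\rm F}^2\le(1-\delta)\|\mathbf{A}\|_{\rm F}^2$; deterministic means $\mathcal{C}$ is a fixed (non-random) map. Bases: for each $i\in[n]$, $\{\mathbf{B}_i^{jl}\}_{j,l\in[d]}$ is a basis of $\mathbb{R}^{d\times d}$ and $h^i(\mathbf{A})$ is the coefficient matrix with $\mathbf{A}=\sum_{j,l}h^i(\mathbf{A})_{jl}\mathbf{B}_i^{jl}$; $N_{\rm B}:=1$ if all these bases are Frobenius-orthogonal, else $N_{\rm B}:=d^2$. Standing assumptions: for all $x,y$, $i$: $\|\nabla^2f_i(x)-\nabla^2f_i(y)\|\le H\|x-y\|$ (spectral), $\|\nabla^2f_i(x)-\nabla^2f_i(y)\|_{\rm F}\le H_1\|x-y\|$,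 $\|h^i(\nabla^2f_i(x))-h^i(\nabla^2f_i(y))\|_{\rm F}\le M_1\|x-y\|$, $\max_{j,l}|h^i(\nabla^2f_i(x))_{jl}-h^i(\nabla^2f_i(y))_{jl}|\le M_2\|x-y\|$, $\max_{j,l}\|\mathbf{B}_i^{jl}\|_{\rm F}\le R$. $[\mathbf{A}]_\mu$ is the Frobenius projection onto $\{\mathbf{A}=\mathbf{A}^\top,\mathbf{A}\succeq\mu\mathbf{I}\}$. Algorithm BL1 (parameters $\alpha,\eta\ge0$, $p\in(0,1]$): initialize $x^0=w^0=z^0$, matrices $\mathbf{L}_i^0$, $\xi^0=1$; $\mathbf{H}_i^k:=\sum_{j,l}(\mathbf{L}_i^k)_{jl}\mathbf{B}_i^{jl}$, $\mathbf{H}^k:=\frac1n\sum_i\mathbf{H}_i^k$. At iteration $k$: if $\xi^k=1$, $w^{k+1}=z^k$, $g^k=\nabla f(z^k)$; if $\xi^k=0$, $w^{k+1}=w^k$, $g^k=[\mathbf{H}^k]_\mu(z^k-w^k)+\nabla f(w^k)$. $\mathbf{L}_i^{k+1}=\mathbf{L}_i^k+\alpha\,\mathcal{C}_i^k(h^i(\nabla^2f_i(z^k))-\mathbf{L}_i^k)$; $x^{k+1}=z^k-[\mathbf{H}^k]_\mu^{-1}g^k$; $z^{k+1}=z^k+\eta\mathcal{Q}^k(x^{k+1}-z^k)$; $\xi^{k+1}\sim$ Bernoulli$(p)$. $\mathbf{L}_i^*:=h^i(\nabla^2f_i(x^* ))$, $\mathcal{H}^k:=\frac1n\sum_i\|\mathbf{L}_i^k-\mathbf{L}_i^*\|_{\rm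 F}^2$. *)

theory Defs
  imports "HOL-Probability.Probability"
begin

type_synonym 'd mat = "real^'d^'d"

definition frob :: "'d::finite mat \<Rightarrow> real" where
  "frob A = sqrt (\<Sum>i\<in>UNIV. \<Sum>j\<in>UNIV. (A$i$j)^2)"

definition frob_inner :: "'d::finite mat \<Rightarrow> 'd mat \<Rightarrow> real" where
  "frob_inner A C = (\<Sum>i\<in>UNIV. \<Sum>j\<in>UNIV. A$i$j * C$i$j)"

definition spec_norm :: "'d::finite mat \<Rightarrow> real" where
  "spec_norm A = onorm (\<lambda>v. A *v v)"

definition sym_ge :: "real \<Rightarrow> 'd::finite mat \<Rightarrow> bool" where
  "sym_ge \<mu> X \<longleftrightarrow> transpose X = X \<and> (\<forall>v. v \<bullet> ((X - \<mu> *\<^sub>R mat 1) *v v) \<ge> 0)"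

definition proj_mu :: "real \<Rightarrow> 'd::finite mat \<Rightarrow> 'd mat" where
  "proj_mu \<mu> A = (THE X. sym_ge \<mu> X \<and> (\<forall>Y. sym_ge \<mu> Y \<longrightarrow> frob (A - X) \<le> frob (A - Y)))"

definition is_mat_basis :: "('d::finite \<Rightarrow> 'd \<Rightarrow> 'd mat) \<Rightarrow> bool" where
  "is_mat_basis B \<longleftrightarrow> (\<forall>A. \<exists>!c::'d mat. A = (\<Sum>j\<in>UNIV. \<Sum>l\<in>UNIV. c$j$l *\<^sub>R B j l))"

definition coeff :: "('d::finite \<Rightarrow> 'd \<Rightarrow> 'd mat) \<Rightarrow> 'd mat \<Rightarrow> 'd mat" where
  "coeff B A = (THE c. A = (\<Sum>j\<in>UNIV. \<Sum>l\<in>UNIV. c$j$l *\<^sub>R B j l))"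

definition N_B :: "nat \<Rightarrow> (nat \<Rightarrow> 'd::finite \<Rightarrow> 'd \<Rightarrow> 'd mat) \<Rightarrow> real" where
  "N_B n B = (if \<forall>i<n. \<forall>j l j' l'. (j, l) \<noteq> (j', l') \<longrightarrow> frob_inner (B i j l) (B i j' l') = 0
              then 1 else real (CARD('d))^2)"

definition strongly_convex :: "real \<Rightarrow> (real^'d::finite \<Rightarrow> real) \<Rightarrow> bool" where
  "strongly_convex \<mu> f \<longleftrightarrow> (\<forall>x y t. 0 \<le> t \<and> t \<le> 1 \<longrightarrow>
     f (t *\<^sub>R x + (1 - t) *\<^sub>R y) \<le> t * f x + (1 - t) * f y - \<mu> / 2 * t * (1 - t) * (norm (x - y))^2)"

definition unbiased_compressor :: "real \<Rightarrow> ('a::euclidean_space \<Rightarrow> 'a pmf) \<Rightarrow> bool" where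
  "unbiased_compressor \<omega> Q \<longleftrightarrow> \<omega> \<ge> 0 \<and> (\<forall>v.
     integrable (measure_pmf (Q v)) (\<lambda>u. u) \<and> measure_pmf.expectation (Q v) (\<lambda>u. u) = v \<and>
     integrable (measure_pmf (Q v)) (\<lambda>u. (norm u)^2) \<and>
     measure_pmf.expectation (Q v) (\<lambda>u. (norm u)^2) \<le> (\<omega> + 1) * (norm v)^2)"

definition contraction_vec :: "real \<Rightarrow> ('a::euclidean_space \<Rightarrow> 'a pmf) \<Rightarrow> bool" where
  "contraction_vec \<delta> Q \<longleftrightarrow> 0 < \<delta> \<and> \<delta> \<le> 1 \<and> (\<forall>v.
     integrable (measure_pmf (Q v)) (\<lambda>u. (norm (v - u))^2) \<and>
     measure_pmf.expectation (Q v) (\<lambda>u. (norm (v - u))^2) \<le> (1 - \<delta>) * (norm v)^2)"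

definition contraction_mat :: "real \<Rightarrow> ('d::finite mat \<Rightarrow> 'd mat pmf) \<Rightarrow> bool" where
  "contraction_mat \<delta> C \<longleftrightarrow> 0 < \<delta> \<and> \<delta> \<le> 1 \<and> (\<forall>A.
     integrable (measure_pmf (C A)) (\<lambda>U. (frob (A - U))^2) \<and>
     measure_pmf.expectation (C A) (\<lambda>U. (frob (A - U))^2) \<le> (1 - \<delta>) * (frob A)^2)"

definition deterministic :: "('a \<Rightarrow> 'b pmf) \<Rightarrow> bool" where
  "deterministic Q \<longleftrightarrow> (\<exists>c. \<forall>a. Q a = return_pmf (c a))"

definition Hmat :: "nat \<Rightarrow> (nat \<Rightarrow> 'd::finite \<Rightarrow> 'd \<Rightarrow> 'd mat) \<Rightarrow> (nat \<Rightarrow> 'd mat) \<Rightarrow> 'd mat" where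
  "Hmat n B L = (1 / real n) *\<^sub>R (\<Sum>i<n. \<Sum>j\<in>UNIV. \<Sum>l\<in>UNIV. (L i)$j$l *\<^sub>R B i j l)"

definition avg_grad :: "nat \<Rightarrow> (nat \<Rightarrow> real^'d::finite \<Rightarrow> real^'d) \<Rightarrow> real^'d \<Rightarrow> real^'d" where
  "avg_grad n grad x = (1 / real n) *\<^sub>R (\<Sum>i<n. grad i x)"

text \<open>A realization (sample path) of Algorithm BL1. xi k = True encodes xi^k = 1.\<close>
definition BL1_run ::
  "nat \<Rightarrow> (nat \<Rightarrow> 'd::finite \<Rightarrow> 'd \<Rightarrow> 'd mat) \<Rightarrow> (nat \<Rightarrow> real^'d \<Rightarrow> real^'d) \<Rightarrow>
   (nat \<Rightarrow> real^'d \<Rightarrow> 'd mat) \<Rightarrow> real \<Rightarrow> real \<Rightarrow> real \<Rightarrow> real \<Rightarrow>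
   (nat \<Rightarrow> real^'d \<Rightarrow> (real^'d) pmf) \<Rightarrow> (nat \<Rightarrow> nat \<Rightarrow> 'd mat \<Rightarrow> 'd mat pmf) \<Rightarrow>
   (nat \<Rightarrow> real^'d) \<Rightarrow> (nat \<Rightarrow> real^'d) \<Rightarrow> (nat \<Rightarrow> real^'d) \<Rightarrow> (nat \<Rightarrow> nat \<Rightarrow> 'd mat) \<Rightarrow>
   (nat \<Rightarrow> bool) \<Rightarrow> (nat \<Rightarrow> real^'d) \<Rightarrow> bool" where
  "BL1_run n B grad hess \<mu> \<alpha> \<eta> p Q C x z w L \<xi> g \<longleftrightarrow>
     w 0 = x 0 \<and> z 0 = x 0 \<and> \<xi> 0 = True \<and>
     (\<forall>k.
        w (Suc k) = (if \<xi> k then z k else w k) \<and>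
        g k = (if \<xi> k then avg_grad n grad (z k)
               else proj_mu \<mu> (Hmat n B (L k)) *v (z k - w k) + avg_grad n grad (w k)) \<and>
        (\<forall>i<n. \<exists>c \<in> set_pmf (C k i (coeff (B i) (hess i (z k)) - L k i)).
                  L (Suc k) i = L k i + \<alpha> *\<^sub>R c) \<and>
        x (Suc k) = z k - matrix_inv (proj_mu \<mu> (Hmat n B (L k))) *v g k \<and>
        (\<exists>q \<in> set_pmf (Q k (x (Suc k) - z k)). z (Suc k) = z k + \<eta> *\<^sub>R q) \<and>
        \<xi> (Suc k) \<in> set_pmf (bernoulli_pmf p))"

definition Hcal :: "nat \<Rightarrow> (nat \<Rightarrow> 'd::finite mat) \<Rightarrow> (nat \<Rightarrow> 'd mat) \<Rightarrow> real" where
  "Hcal n Lk Lstar = (1 / real n) * (\<Sum>i<n. (frob (Lk i - Lstar i))^2)"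

definition convex_comb_of :: "real \<Rightarrow> nat \<Rightarrow> (nat \<Rightarrow> real) \<Rightarrow> bool" where
  "convex_comb_of y k a \<longleftrightarrow> (\<exists>c::nat \<Rightarrow> real. (\<forall>t\<le>k. c t \<ge> 0) \<and> (\<Sum>t\<le>k. c t) = 1 \<and>
      y = (\<Sum>t\<le>k. c t * a t))"

end

theory Submission
  imports Defs
begin

lemma frob_eq_norm: "frob (A::'d::finite mat) = norm A"
  unfolding frob_def norm_vec_def L2_set_def
  by (simp add: real_sqrt_pow2 sum_nonneg)

lemma frob_inner_eq: "frob_inner (A::'d::finite mat) C = inner A C"
  unfolding frob_inner_def inner_vec_def by simp



lemma norm_mv_le2: "(norm ((A::'d::finite mat) *v v))^2 \<le> (norm A)^2 * (norm v)^2"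
proof -
  have "(norm (A *v v))^2 = (\<Sum>i\<in>UNIV. ((A *v v) $ i)^2)"
    unfolding norm_vec_def L2_set_def by (simp add: real_sqrt_pow2 sum_nonneg)
  also have "\<dots> \<le> (\<Sum>i\<in>UNIV. (norm (A $ i))^2 * (norm v)^2)"
  proof (rule sum_mono)
    fix i
    have "\<bar>(A *v v) $ i\<bar> \<le> norm(A $ i) * norm v"
      by (simp add: matrix_mult_dot Cauchy_Schwarz_ineq2)
    then show "((A *v v) $ i)^2 \<le> (norm (A $ i))^2 * (norm v)^2"
      by (metis abs_ge_zero power2_abs power_mono power_mult_distrib)
  qed
  also have "\<dots> = (norm A)^2 * (norm v)^2"
    unfolding sum_distrib_right[symmetric] norm_vec_def[of A] L2_set_def
    by (simp add: real_sqrt_pow2 sum_nonneg)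
  finally show ?thesis .
qed

lemma norm_mv_le: "norm ((A::'d::finite mat) *v v) \<le> norm A * norm v"
  using norm_mv_le2[of A v]
  by (metis norm_ge_zero power_mult_distrib power2_le_imp_le mult_nonneg_nonneg)

lemma spec_le: "norm ((A::'d::finite mat) *v v) \<le> spec_norm A * norm v"
  unfolding spec_norm_def by (rule onorm) simp

definition SG :: "real \<Rightarrow> 'd::finite mat set" where "SG \<mu> = {X. sym_ge \<mu> X}"

lemma cont_comp2: "continuous_on UNIV (\<lambda>X::'d::finite mat. X $ i $ j)"
  by (intro continuous_intros)

lemma SG_closed: "closed (SG \<mu>)"
proof -
  have eq: "SG \<mu> = (\<Inter>i. \<Inter>j. {X. X $ i $ j = X $ j $ i}) \<inter> (\<Inter>v. {X. v \<bullet> ((X - \<mu> *\<^sub>R mat 1) *v v) \<ge> 0})"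
    unfolding SG_def sym_ge_def by (auto simp: transpose_def vec_eq_iff)
  have c1: "closed {X::'d::finite mat. X $ i $ j = X $ j $ i}" for i j
    by (rule closed_Collect_eq) (intro continuous_intros)+
  have c2: "closed {X::'d::finite mat. v \<bullet> ((X - \<mu> *\<^sub>R mat 1) *v v) \<ge> 0}" for v
    by (rule closed_Collect_le) (auto simp: inner_vec_def matrix_vector_mult_def intro!: continuous_intros)
  show ?thesis unfolding eq by (intro closed_Int closed_INT ballI c1 c2)
qed

lemma SG_convex: "convex (SG \<mu>)"
proof (rule convexI)
  fix X Y :: "'d::finite mat" and u v :: real
  assume XS: "X \<in> SG \<mu>" and YS: "Y \<in> SG \<mu>" and uv: "0 \<le> u" "0 \<le> v" "u + v = 1"
  have tX: "transpose X = X" and tY: "transpose Y = Y" using XS YS unfolding SG_def sym_ge_def by auto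
  have X: "\<And>w. 0 \<le> w \<bullet> ((X - \<mu> *\<^sub>R mat 1) *v w)" using XS unfolding SG_def sym_ge_def by auto
  have Y: "\<And>w. 0 \<le> w \<bullet> ((Y - \<mu> *\<^sub>R mat 1) *v w)" using YS unfolding SG_def sym_ge_def by auto
  have t: "transpose (u *\<^sub>R X + v *\<^sub>R Y) = u *\<^sub>R X + v *\<^sub>R Y"
    using tX tY by (simp add: transpose_def vec_eq_iff)
  have e: "u *\<^sub>R X + v *\<^sub>R Y - \<mu> *\<^sub>R mat 1 = u *\<^sub>R (X - \<mu> *\<^sub>R mat 1) + v *\<^sub>R (Y - \<mu> *\<^sub>R mat 1)"
  proof -
    have "u *\<^sub>R X + v *\<^sub>R Y - \<mu> *\<^sub>R mat 1 = u *\<^sub>R X + v *\<^sub>R Y - (u + v) *\<^sub>R (\<mu> *\<^sub>R (mat 1::'d mat))" using uv by simp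
    also have "\<dots> = u *\<^sub>R (X - \<mu> *\<^sub>R mat 1) + v *\<^sub>R (Y - \<mu> *\<^sub>R mat 1)"
      by (simp only: scaleR_add_left scaleR_diff_right) (simp add: algebra_simps)
    finally show ?thesis .
  qed
  have "0 \<le> w \<bullet> ((u *\<^sub>R X + v *\<^sub>R Y - \<mu> *\<^sub>R mat 1) *v w)" for w
  proof -
    have "w \<bullet> ((u *\<^sub>R X + v *\<^sub>R Y - \<mu> *\<^sub>R mat 1) *v w) = u * (w \<bullet> ((X - \<mu> *\<^sub>R mat 1) *v w)) + v * (w \<bullet> ((Y - \<mu> *\<^sub>R mat 1) *v w))"
      unfolding e by (simp add: matrix_vector_mult_add_rdistrib inner_add_right scaleR_matrix_vector_assoc[symmetric])
    then show ?thesis using X[of w] Y[of w] uv by simp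
  qed
  then show "u *\<^sub>R X + v *\<^sub>R Y \<in> SG \<mu>" using t unfolding SG_def sym_ge_def by auto
qed

lemma SG_nonempty: "\<mu> *\<^sub>R mat 1 \<in> SG \<mu>"
  unfolding SG_def sym_ge_def by (simp add: transpose_def vec_eq_iff mat_def)

lemma proj_char:
  fixes A :: "'d::finite mat"
  shows "sym_ge \<mu> (proj_mu \<mu> A) \<and> (\<forall>Y. sym_ge \<mu> Y \<longrightarrow> norm (A - proj_mu \<mu> A) \<le> norm (A - Y))"
proof -
  let ?P = "closest_point (SG \<mu>) A"
  have inS: "?P \<in> SG \<mu>" using closest_point_in_set[OF SG_closed] SG_nonempty by blast
  have mn: "\<forall>y\<in>SG \<mu>. dist A ?P \<le> dist A y" using closest_point_exists(2)[OF SG_closed] SG_nonempty by blast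
  have c1: "sym_ge \<mu> ?P" using inS unfolding SG_def by simp
  have c2: "\<forall>Y. sym_ge \<mu> Y \<longrightarrow> norm (A - ?P) \<le> norm (A - Y)"
  proof (intro allI impI)
    fix Y :: "'d mat" assume "sym_ge \<mu> Y" then have "Y \<in> SG \<mu>" unfolding SG_def by simp
    then show "norm (A - ?P) \<le> norm (A - Y)" using mn unfolding dist_norm by blast
  qed
  have "(THE X. sym_ge \<mu> X \<and> (\<forall>Y. sym_ge \<mu> Y \<longrightarrow> frob (A - X) \<le> frob (A - Y))) = ?P"
  proof (rule the_equality)
    show "sym_ge \<mu> ?P \<and> (\<forall>Y. sym_ge \<mu> Y \<longrightarrow> frob (A - ?P) \<le> frob (A - Y))"
      using c1 c2 unfolding frob_eq_norm by blast
  next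
    fix X assume X: "sym_ge \<mu> X \<and> (\<forall>Y. sym_ge \<mu> Y \<longrightarrow> frob (A - X) \<le> frob (A - Y))"
    have "X \<in> SG \<mu>" using X unfolding SG_def by simp
    moreover have "\<forall>z\<in>SG \<mu>. dist A X \<le> dist A z" using X unfolding SG_def dist_norm frob_eq_norm by blast
    ultimately show "X = ?P"
      by (rule closest_point_unique[OF SG_convex SG_closed])
  qed
  then have "proj_mu \<mu> A = ?P" unfolding proj_mu_def .
  then show ?thesis using c1 c2 by simp
qed

lemma sym_ge_lower:
  fixes X :: "'d::finite mat"
  assumes "sym_ge \<mu> X"
  shows "\<mu> * (norm v)^2 \<le> v \<bullet> (X *v v)"
proof -
  have "0 \<le> v \<bullet> ((X - \<mu> *\<^sub>R mat 1) *v v)" using assms unfolding sym_ge_def by blast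
  also have "\<dots> = v \<bullet> (X *v v) - \<mu> * (v \<bullet> v)"
    by (simp add: matrix_vector_mult_diff_rdistrib inner_diff_right scaleR_matrix_vector_assoc[symmetric])
  finally show ?thesis by (simp add: power2_norm_eq_inner)
qed

lemma sym_ge_norm:
  fixes X :: "'d::finite mat"
  assumes "sym_ge \<mu> X"
  shows "\<mu> * norm v \<le> norm (X *v v)"
proof (cases "v = 0")
  case False
  have "\<mu> * (norm v)^2 \<le> v \<bullet> (X *v v)" by (rule sym_ge_lower[OF assms])
  also have "\<dots> \<le> norm v * norm (X *v v)" by (rule Cauchy_Schwarz_ineq2[THEN order_trans[OF abs_ge_self]])
  finally have "(\<mu> * norm v) * norm v \<le> norm (X *v v) * norm v" by (simp add: power2_eq_square algebra_simps)
  moreover have "norm v > 0" using False by simp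
  ultimately show ?thesis by (meson mult_right_le_imp_le)
qed simp

lemma sym_ge_inv:
  fixes X :: "'d::finite mat"
  assumes "sym_ge \<mu> X" "\<mu> > 0"
  shows "matrix_inv X ** X = mat 1" "X ** matrix_inv X = mat 1"
    "\<And>u. norm (matrix_inv X *v u) \<le> norm u / \<mu>"
proof -
  have "inj ((*v) X)"
  proof (rule injI)
    fix a b assume "X *v a = X *v b"
    then have "X *v (a - b) = 0" by (simp add: matrix_vector_mult_diff_distrib)
    then have "\<mu> * norm (a - b) \<le> 0" using sym_ge_norm[OF assms(1), of "a - b"] by simp
    then show "a = b" using assms(2) by (simp add: mult_le_0_iff)
  qed
  then have inv: "invertible X" using invertible_left_inverse matrix_left_invertible_injective by blast
  show 1: "matrix_inv X ** X = mat 1" "X ** matrix_inv X = mat 1"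
    using someI_ex[OF inv[unfolded invertible_def]] unfolding matrix_inv_def by auto
  fix u
  have "X *v (matrix_inv X *v u) = u" using 1 by (simp add: matrix_vector_mul_assoc)
  then have "\<mu> * norm (matrix_inv X *v u) \<le> norm u" using sym_ge_norm[OF assms(1), of "matrix_inv X *v u"] by simp
  then show "norm (matrix_inv X *v u) \<le> norm u / \<mu>" using assms(2) by (simp add: field_simps)
qed

lemma lim_le_lemma:
  fixes a b c :: real
  assumes "c \<ge> 0" "\<And>t. 0 < t \<Longrightarrow> t < 1 \<Longrightarrow> a \<le> b + t * c"
  shows "a \<le> b"
proof (rule ccontr)
  assume "\<not> a \<le> b"
  define t where "t = min (1/2) ((a - b) / (2 * (c + 1)))"
  have t0: "0 < t" "t < 1" using \<open>\<not> a \<le> b\<close> assms(1) by (auto simp: t_def)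
  have "t * c \<le> ((a - b) / (2 * (c + 1))) * c" using assms(1) by (intro mult_right_mono) (auto simp: t_def)
  also have "\<dots> < a - b"
  proof -
    have "0 < (a - b) * (c + 2)" using \<open>\<not> a \<le> b\<close> assms(1) by (intro mult_pos_pos) auto
    then have "b * c + b * 2 < a * c + a * 2" by (simp add: algebra_simps)
    then show ?thesis using assms(1) by (simp add: field_simps)
  qed
  finally show False using assms(2)[OF t0] by simp
qed

lemma mv_sum: "(\<Sum>i\<in>S. (A i :: 'd::finite mat)) *v v = (\<Sum>i\<in>S. A i *v v)"
  by (induction S rule: infinite_finite_induct) (auto simp: matrix_vector_mult_add_rdistrib)

lemma onorm_inner_le: "onorm (\<lambda>v::real^'d::finite. a \<bullet> v) \<le> norm a"
  by (rule onorm_le) (simp add: Cauchy_Schwarz_ineq2)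

lemma real_seg_bound:
  fixes \<phi> \<phi>' :: "real \<Rightarrow> real"
  assumes "s \<ge> 0" "\<And>\<sigma>. 0 \<le> \<sigma> \<Longrightarrow> \<sigma> \<le> s \<Longrightarrow> (\<phi> has_derivative (\<lambda>h. h * \<phi>' \<sigma>)) (at \<sigma>)"
    "\<And>\<sigma>. 0 \<le> \<sigma> \<Longrightarrow> \<sigma> \<le> s \<Longrightarrow> \<bar>\<phi>' \<sigma> - c\<bar> \<le> B"
  shows "\<bar>\<phi> s - \<phi> 0 - s * c\<bar> \<le> B * s"
proof -
  have "norm ((\<lambda>\<sigma>. \<phi> \<sigma> - \<sigma> * c) s - (\<lambda>\<sigma>. \<phi> \<sigma> - \<sigma> * c) 0) \<le> B * norm (s - 0)"
  proof (rule differentiable_bound[where S="{0..s}" and f'="\<lambda>\<sigma> h. h * (\<phi>' \<sigma> - c)"])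
    show "convex {0..s}" by (rule convex_real_interval)
    show "s \<in> {0..s}" using assms(1) by simp
    show "0 \<in> {0..s}" using assms(1) by simp
  next
    fix x assume x: "x \<in> {0..s}"
    show "((\<lambda>\<sigma>. \<phi> \<sigma> - \<sigma> * c) has_derivative (\<lambda>h. h * (\<phi>' x - c))) (at x within {0..s})"
    proof -
      have d: "(\<phi> has_derivative (\<lambda>h. h * \<phi>' x)) (at x within {0..s})"
        using x by (auto intro!: has_derivative_at_withinI[OF assms(2)])
      have "((\<lambda>\<sigma>. \<phi> \<sigma> - \<sigma> * c) has_derivative (\<lambda>h. h * \<phi>' x - h * c)) (at x within {0..s})"
        by (intro has_derivative_diff d has_derivative_mult_left has_derivative_ident)
      moreover have "(\<lambda>h. h * \<phi>' x - h * c) = (\<lambda>h. h * (\<phi>' x - c))" by (simp add: right_diff_distrib)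
      ultimately show ?thesis by simp
    qed
  next
    fix x assume x: "x \<in> {0..s}"
    show "onorm (\<lambda>h. h * (\<phi>' x - c)) \<le> B"
    proof (rule onorm_le)
      fix h
      have "\<bar>\<phi>' x - c\<bar> \<le> B" using assms(3)[of x] x by auto
      then show "norm (h * (\<phi>' x - c)) \<le> B * norm h"
        by (simp add: abs_mult) (metis abs_ge_zero mult.commute mult_right_mono)
    qed
  qed
  then show ?thesis using assms(1) by (simp add: algebra_simps)
qed

definition FF :: "nat \<Rightarrow> (nat \<Rightarrow> real^'d::finite \<Rightarrow> real) \<Rightarrow> real^'d \<Rightarrow> real" where
  "FF n f x = (1 / real n) * (\<Sum>i<n. f i x)"

definition hF :: "nat \<Rightarrow> (nat \<Rightarrow> real^'d::finite \<Rightarrow> 'd mat) \<Rightarrow> real^'d \<Rightarrow> 'd mat" where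
  "hF n hess x = (1 / real n) *\<^sub>R (\<Sum>i<n. hess i x)"

locale bls =
  fixes n :: nat and f :: "nat \<Rightarrow> real^'d::finite \<Rightarrow> real" and grad :: "nat \<Rightarrow> real^'d \<Rightarrow> real^'d"
    and hess :: "nat \<Rightarrow> real^'d \<Rightarrow> 'd mat" and H :: real
  assumes n_pos: "n \<ge> 1"
    and grad: "\<And>i x. i < n \<Longrightarrow> (f i has_derivative (\<lambda>v. grad i x \<bullet> v)) (at x)"
    and hess: "\<And>i x. i < n \<Longrightarrow> (grad i has_derivative (\<lambda>v. hess i x *v v)) (at x)"
    and Lip_H: "\<And>i x y. i < n \<Longrightarrow> spec_norm (hess i x - hess i y) \<le> H * norm (x - y)"
    and H_nn: "H \<ge> 0"

context bls
begin

lemma F_deriv: "(FF n f has_derivative (\<lambda>v. avg_grad n grad x \<bullet> v)) (at x)"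
proof -
  have d0: "((\<lambda>x. \<Sum>i<n. f i x) has_derivative (\<lambda>v. \<Sum>i<n. grad i x \<bullet> v)) (at x)"
    by (rule has_derivative_sum) (rule grad, simp)
  have d: "((\<lambda>x. (1 / real n) * (\<Sum>i<n. f i x)) has_derivative (\<lambda>v. (1 / real n) * (\<Sum>i<n. grad i x \<bullet> v))) (at x)"
    by (rule has_derivative_mult_right[OF d0])
  have eq: "(\<lambda>v. (1 / real n) * (\<Sum>i<n. grad i x \<bullet> v)) = (\<lambda>v. avg_grad n grad x \<bullet> v)"
    unfolding avg_grad_def inner_scaleR_left inner_sum_left by (rule refl)
  have "((\<lambda>x. (1 / real n) * (\<Sum>i<n. f i x)) has_derivative (\<lambda>v. avg_grad n grad x \<bullet> v)) (at x)"
    by (rule has_derivative_eq_rhs[OF d eq])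
  then show ?thesis unfolding FF_def[abs_def] .
qed

lemma hF_mv: "hF n hess x *v v = (1 / real n) *\<^sub>R (\<Sum>i<n. hess i x *v v)"
  unfolding hF_def by (simp add: scaleR_matrix_vector_assoc[symmetric] mv_sum)

lemma g_deriv: "(avg_grad n grad has_derivative (\<lambda>v. hF n hess x *v v)) (at x)"
proof -
  have "((\<lambda>x. \<Sum>i<n. grad i x) has_derivative (\<lambda>v. \<Sum>i<n. hess i x *v v)) (at x)"
    by (rule has_derivative_sum) (rule hess, simp)
  then have "((\<lambda>x. (1 / real n) *\<^sub>R (\<Sum>i<n. grad i x)) has_derivative (\<lambda>v. (1 / real n) *\<^sub>R (\<Sum>i<n. hess i x *v v))) (at x)"
    by (rule has_derivative_scaleR_right)
  then show ?thesis unfolding avg_grad_def hF_mv[symmetric] .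
qed

lemma hF_lip: "norm ((hF n hess a - hF n hess b) *v v) \<le> H * norm (a - b) * norm v"
proof -
  have "(hF n hess a - hF n hess b) *v v = (1 / real n) *\<^sub>R (\<Sum>i<n. (hess i a - hess i b) *v v)"
    by (simp add: matrix_vector_mult_diff_rdistrib hF_mv sum_subtractf scaleR_diff_right)
  then have "norm ((hF n hess a - hF n hess b) *v v) = (1 / real n) * norm (\<Sum>i<n. (hess i a - hess i b) *v v)"
    by simp
  also have "\<dots> \<le> (1 / real n) * (\<Sum>i<n. norm ((hess i a - hess i b) *v v))"
    by (intro mult_left_mono norm_sum) auto
  also have "\<dots> \<le> (1 / real n) * (\<Sum>i<n. H * norm (a - b) * norm v)"
  proof (intro mult_left_mono sum_mono)
    fix i assume "i \<in> {..<n}"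
    then have "spec_norm (hess i a - hess i b) \<le> H * norm (a - b)" using Lip_H by auto
    then show "norm ((hess i a - hess i b) *v v) \<le> H * norm (a - b) * norm v"
      using spec_le[of "hess i a - hess i b" v] by (meson mult_right_mono norm_ge_zero order_trans)
  qed auto
  also have "\<dots> = H * norm (a - b) * norm v" using n_pos by simp
  finally show ?thesis .
qed

lemma taylor_grad: "norm (avg_grad n grad y - avg_grad n grad u - hF n hess u *v (y - u)) \<le> H * (norm (y - u))^2"
proof -
  let ?g = "\<lambda>x. avg_grad n grad x - hF n hess u *v x"
  have "norm (?g y - ?g u) \<le> (H * norm (y - u)) * norm (y - u)"
  proof (rule differentiable_bound[where S="closed_segment u y" and f'="\<lambda>x v. (hF n hess x - hF n hess u) *v v"])
    fix x assume x: "x \<in> closed_segment u y"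
    have "(?g has_derivative (\<lambda>v. hF n hess x *v v - hF n hess u *v v)) (at x)"
      by (intro has_derivative_diff g_deriv) (simp add: linear_imp_has_derivative)
    moreover have "(\<lambda>v. hF n hess x *v v - hF n hess u *v v) = (\<lambda>v. (hF n hess x - hF n hess u) *v v)"
      by (simp add: matrix_vector_mult_diff_rdistrib)
    ultimately show "(?g has_derivative (\<lambda>v. (hF n hess x - hF n hess u) *v v)) (at x within closed_segment u y)"
      by (metis has_derivative_at_withinI)
    have nx: "norm (x - u) \<le> norm (y - u)" using segment_bound(1)[OF x] .
    show "onorm (\<lambda>v. (hF n hess x - hF n hess u) *v v) \<le> H * norm (y - u)"
    proof (rule onorm_le)
      fix v
      have "norm ((hF n hess x - hF n hess u) *v v) \<le> H * norm (x - u) * norm v" by (rule hF_lip)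
      also have "\<dots> \<le> H * norm (y - u) * norm v"
        by (intro mult_right_mono mult_left_mono nx H_nn norm_ge_zero)
      finally show "norm ((hF n hess x - hF n hess u) *v v) \<le> H * norm (y - u) * norm v" .
    qed
  qed (simp_all add: convex_closed_segment)
  then show ?thesis by (simp add: matrix_vector_mult_diff_distrib power2_eq_square algebra_simps)
qed

end

locale blc = bls n f grad hess H
  for n :: nat and f :: "nat \<Rightarrow> real^'d::finite \<Rightarrow> real" and grad :: "nat \<Rightarrow> real^'d \<Rightarrow> real^'d"
    and hess :: "nat \<Rightarrow> real^'d \<Rightarrow> 'd mat" and H :: real +
  fixes \<mu> :: real and xstar :: "real^'d"
  assumes strong: "strongly_convex \<mu> (FF n f)"
    and xstar_min: "\<And>y. FF n f xstar \<le> FF n f y"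
    and mu_pos: "\<mu> > 0"

context blc
begin

lemmas Fd = F_deriv
lemmas gd = g_deriv
lemmas hlip = hF_lip
lemmas tg = taylor_grad

abbreviation "g \<equiv> avg_grad n grad"
abbreviation "F \<equiv> FF n f"
abbreviation "M \<equiv> hF n hess"

lemma grad_zero: "g xstar = 0"
proof -
  have "(\<lambda>v. g xstar \<bullet> v) = (\<lambda>h. 0)"
    by (rule has_derivative_local_min[OF Fd]) (intro always_eventually allI xstar_min)
  then have "g xstar \<bullet> g xstar = 0" by metis
  then show ?thesis by simp
qed

lemma taylor_F: "F y \<ge> F x + g x \<bullet> (y - x) - (norm (M x) + H * norm (y - x)) * (norm (y - x))^2"
proof -
  let ?p = "\<lambda>z. F z - g x \<bullet> z"
  have "norm (?p y - ?p x) \<le> ((norm (M x) + H * norm (y - x)) * norm (y - x)) * norm (y - x)"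
  proof (rule differentiable_bound[where S="closed_segment x y" and f'="\<lambda>z v. (g z - g x) \<bullet> v"])
    show "convex (closed_segment x y)" by (rule convex_closed_segment)
    show "y \<in> closed_segment x y" by simp
    show "x \<in> closed_segment x y" by simp
  next
    fix z assume z: "z \<in> closed_segment x y"
    have "(?p has_derivative (\<lambda>v. g z \<bullet> v - g x \<bullet> v)) (at z)"
      by (intro has_derivative_diff Fd bounded_linear_imp_has_derivative bounded_linear_inner_right)
    moreover have "(\<lambda>v. g z \<bullet> v - g x \<bullet> v) = (\<lambda>v. (g z - g x) \<bullet> v)" by (simp add: inner_diff_left)
    ultimately show "(?p has_derivative (\<lambda>v. (g z - g x) \<bullet> v)) (at z within closed_segment x y)"
      by (metis has_derivative_at_withinI)
    have nz: "norm (z - x) \<le> norm (y - x)" by (rule segment_bound(1)[OF z])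
    have "norm (g z - g x) \<le> norm (M x *v (z - x)) + norm (g z - g x - M x *v (z - x))"
      by (metis add.commute diff_add_cancel norm_triangle_ineq)
    also have "\<dots> \<le> norm (M x) * norm (z - x) + H * (norm (z - x))^2"
      by (intro add_mono norm_mv_le tg)
    also have "\<dots> \<le> norm (M x) * norm (y - x) + H * norm (y - x) * norm (y - x)"
      using nz H_nn by (intro add_mono mult_left_mono) (auto simp: power2_eq_square mult.assoc intro!: mult_left_mono mult_mono)
    finally have "norm (g z - g x) \<le> (norm (M x) + H * norm (y - x)) * norm (y - x)"
      by (simp add: algebra_simps)
    then show "onorm (\<lambda>v. (g z - g x) \<bullet> v) \<le> (norm (M x) + H * norm (y - x)) * norm (y - x)"
      using onorm_inner_le order_trans by blast
  qed
  then have "\<bar>F y - F x - g x \<bullet> (y - x)\<bar> \<le> (norm (M x) + H * norm (y - x)) * (norm (y - x))^2"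
    by (simp add: inner_diff_right power2_eq_square algebra_simps)
  then show ?thesis by linarith
qed

lemma first_order: "g x \<bullet> (y - x) \<le> F y - F x - \<mu> / 2 * (norm (y - x))^2"
proof -
  let ?d = "y - x"
  define K0 where "K0 = (norm (M x) + H * norm ?d) * (norm ?d)^2"
  have K0: "K0 \<ge> 0" unfolding K0_def using H_nn by simp
  show ?thesis
  proof (rule lim_le_lemma[where c="\<mu> / 2 * (norm ?d)^2 + K0"])
    show "0 \<le> \<mu> / 2 * (norm ?d)^2 + K0" using K0 mu_pos by simp
    fix t :: real assume t: "0 < t" "t < 1"
    let ?p = "t *\<^sub>R y + (1 - t) *\<^sub>R x"
    have p: "?p = x + t *\<^sub>R ?d" by (simp add: algebra_simps)
    have sc: "F ?p \<le> t * F y + (1 - t) * F x - \<mu> / 2 * t * (1 - t) * (norm (y - x))^2"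
      using strong t unfolding strongly_convex_def by auto
    have tf: "F ?p \<ge> F x + g x \<bullet> (t *\<^sub>R ?d) - (norm (M x) + H * norm (t *\<^sub>R ?d)) * (norm (t *\<^sub>R ?d))^2"
      using taylor_F[of x ?p] unfolding p by simp
    have nt: "norm (t *\<^sub>R ?d) = t * norm ?d" using t by simp
    have "(norm (M x) + H * norm (t *\<^sub>R ?d)) * (norm (t *\<^sub>R ?d))^2 = t^2 * ((norm (M x) + t * H * norm ?d) * (norm ?d)^2)"
      unfolding nt by (simp add: power2_eq_square algebra_simps)
    also have "\<dots> \<le> t^2 * K0" unfolding K0_def using t H_nn
      by (intro mult_left_mono mult_right_mono add_mono) (auto intro!: mult_left_le_one_le mult_nonneg_nonneg)
    finally have "t * (g x \<bullet> ?d) \<le> t * (F y - F x) - \<mu> / 2 * t * (1 - t) * (norm ?d)^2 + t^2 * K0"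
      using sc tf by (simp add: algebra_simps)
    then have "t * (g x \<bullet> ?d) \<le> t * ((F y - F x - \<mu> / 2 * (norm ?d)^2) + t * (\<mu> / 2 * (norm ?d)^2 + K0))"
      by (simp add: algebra_simps power2_eq_square diff_divide_distrib)
    then show "g x \<bullet> ?d \<le> (F y - F x - \<mu> / 2 * (norm ?d)^2) + t * (\<mu> / 2 * (norm ?d)^2 + K0)"
      using t by simp
  qed
qed

lemma mono_star: "\<mu> * (norm (y - xstar))^2 \<le> g y \<bullet> (y - xstar)"
proof -
  have a: "g y \<bullet> (xstar - y) \<le> F xstar - F y - \<mu> / 2 * (norm (xstar - y))^2" by (rule first_order)
  have b: "g xstar \<bullet> (y - xstar) \<le> F y - F xstar - \<mu> / 2 * (norm (y - xstar))^2" by (rule first_order)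
  have c: "norm (xstar - y) = norm (y - xstar)" by (rule norm_minus_commute)
  have e: "g y \<bullet> (xstar - y) = - (g y \<bullet> (y - xstar))" by (simp add: inner_diff_right)
  show ?thesis using a b c e grad_zero by simp
qed

lemma psd_star: "\<mu> * (norm v)^2 \<le> v \<bullet> (M xstar *v v)"
proof (rule lim_le_lemma[where c="H * (norm v)^3"])
  show "0 \<le> H * (norm v)^3" using H_nn by simp
  fix t :: real assume t: "0 < t" "t < 1"
  let ?y = "xstar + t *\<^sub>R v"
  define e where "e = g ?y - g xstar - M xstar *v (?y - xstar)"
  have ne: "norm e \<le> H * (norm (t *\<^sub>R v))^2" unfolding e_def using tg[of ?y xstar] by simp
  have gy: "g ?y = t *\<^sub>R (M xstar *v v) + e" unfolding e_def using grad_zero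
    by (simp add: scaleR_matrix_vector_assoc[symmetric] matrix_vector_mult_scaleR)
  have "\<mu> * (norm (t *\<^sub>R v))^2 \<le> g ?y \<bullet> (t *\<^sub>R v)" using mono_star[of ?y] by simp
  also have "\<dots> = t^2 * (v \<bullet> (M xstar *v v)) + t * (e \<bullet> v)"
    unfolding gy by (simp add: inner_add_left inner_add_right inner_commute power2_eq_square)
  also have "\<dots> \<le> t^2 * (v \<bullet> (M xstar *v v)) + t * (H * t^2 * (norm v)^3)"
  proof -
    have "e \<bullet> v \<le> norm e * norm v" by (rule norm_cauchy_schwarz)
    also have "\<dots> \<le> H * (norm (t *\<^sub>R v))^2 * norm v" by (intro mult_right_mono ne) simp
    also have "\<dots> = H * t^2 * (norm v)^3" using t by (simp add: power_mult_distrib power3_eq_cube power2_eq_square)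
    finally show ?thesis using t by (simp add: mult_left_mono)
  qed
  finally have "t^2 * (\<mu> * (norm v)^2) \<le> t^2 * (v \<bullet> (M xstar *v v) + t * (H * (norm v)^3))"
    using t by (simp add: power_mult_distrib algebra_simps)
  then show "\<mu> * (norm v)^2 \<le> v \<bullet> (M xstar *v v) + t * (H * (norm v)^3)"
    using t by simp
qed

lemma D_approx:
  assumes s: "0 \<le> s"
  shows "\<bar>(F (x + s *\<^sub>R v + s *\<^sub>R w) - F (x + s *\<^sub>R v)) - (F (x + 0 *\<^sub>R v + s *\<^sub>R w) - F (x + 0 *\<^sub>R v)) - s * (s * (v \<bullet> (M x *v w)))\<bar>
     \<le> (s^2 * (H * norm v * norm w * (norm v + norm w))) * s"
proof (rule real_seg_bound[OF s, where \<phi>="\<lambda>\<sigma>. F (x + \<sigma> *\<^sub>R v + s *\<^sub>R w) - F (x + \<sigma> *\<^sub>R v)"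
      and \<phi>'="\<lambda>\<sigma>. (g (x + \<sigma> *\<^sub>R v + s *\<^sub>R w) - g (x + \<sigma> *\<^sub>R v)) \<bullet> v"])
  fix \<sigma> :: real assume \<sigma>: "0 \<le> \<sigma>" "\<sigma> \<le> s"
  have l1: "((\<lambda>\<sigma>. x + \<sigma> *\<^sub>R v + s *\<^sub>R w) has_derivative (\<lambda>h. h *\<^sub>R v)) (at \<sigma>)"
    by (rule has_derivative_eq_rhs[OF has_derivative_add[OF has_derivative_add[OF has_derivative_const has_derivative_scaleR_left[OF has_derivative_ident]] has_derivative_const]]) simp
  have l2: "((\<lambda>\<sigma>. x + \<sigma> *\<^sub>R v) has_derivative (\<lambda>h. h *\<^sub>R v)) (at \<sigma>)"
    by (rule has_derivative_eq_rhs[OF has_derivative_add[OF has_derivative_const has_derivative_scaleR_left[OF has_derivative_ident]]]) simp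
  have c1: "((\<lambda>\<sigma>. F (x + \<sigma> *\<^sub>R v + s *\<^sub>R w)) has_derivative (\<lambda>h. g (x + \<sigma> *\<^sub>R v + s *\<^sub>R w) \<bullet> (h *\<^sub>R v))) (at \<sigma>)"
    by (rule has_derivative_compose[OF l1 Fd])
  have c2: "((\<lambda>\<sigma>. F (x + \<sigma> *\<^sub>R v)) has_derivative (\<lambda>h. g (x + \<sigma> *\<^sub>R v) \<bullet> (h *\<^sub>R v))) (at \<sigma>)"
    by (rule has_derivative_compose[OF l2 Fd])
  show "((\<lambda>\<sigma>. F (x + \<sigma> *\<^sub>R v + s *\<^sub>R w) - F (x + \<sigma> *\<^sub>R v)) has_derivative
      (\<lambda>h. h * ((g (x + \<sigma> *\<^sub>R v + s *\<^sub>R w) - g (x + \<sigma> *\<^sub>R v)) \<bullet> v))) (at \<sigma>)"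
    by (rule has_derivative_eq_rhs[OF has_derivative_diff[OF c1 c2]]) (simp add: inner_diff_left algebra_simps)
  let ?p = "x + \<sigma> *\<^sub>R v"
  have e1: "(g (?p + s *\<^sub>R w) - g ?p) \<bullet> v - s * (v \<bullet> (M x *v w))
       = (g (?p + s *\<^sub>R w) - g ?p - M ?p *v (s *\<^sub>R w)) \<bullet> v + ((M ?p - M x) *v (s *\<^sub>R w)) \<bullet> v"
    by (simp add: inner_diff_left inner_diff_right inner_add_left inner_scaleR_right matrix_vector_mult_diff_rdistrib inner_commute
        scaleR_matrix_vector_assoc[symmetric] matrix_vector_mult_scaleR algebra_simps)
  have b1: "\<bar>(g (?p + s *\<^sub>R w) - g ?p - M ?p *v (s *\<^sub>R w)) \<bullet> v\<bar> \<le> H * (s * norm w)^2 * norm v"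
  proof -
    have "\<bar>(g (?p + s *\<^sub>R w) - g ?p - M ?p *v (s *\<^sub>R w)) \<bullet> v\<bar> \<le> norm (g (?p + s *\<^sub>R w) - g ?p - M ?p *v (s *\<^sub>R w)) * norm v"
      by (rule Cauchy_Schwarz_ineq2)
    also have "\<dots> \<le> H * (norm (s *\<^sub>R w))^2 * norm v"
      by (intro mult_right_mono) (use tg[of "?p + s *\<^sub>R w" ?p] in auto)
    finally show ?thesis using s by simp
  qed
  have b2: "\<bar>((M ?p - M x) *v (s *\<^sub>R w)) \<bullet> v\<bar> \<le> H * (s * norm v) * (s * norm w) * norm v"
  proof -
    have "\<bar>((M ?p - M x) *v (s *\<^sub>R w)) \<bullet> v\<bar> \<le> norm ((M ?p - M x) *v (s *\<^sub>R w)) * norm v"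
      by (rule Cauchy_Schwarz_ineq2)
    also have "\<dots> \<le> (H * norm (?p - x) * norm (s *\<^sub>R w)) * norm v"
      by (intro mult_right_mono hlip) simp
    also have "\<dots> \<le> H * (s * norm v) * (s * norm w) * norm v"
      using \<sigma> s H_nn by (auto intro!: mult_right_mono mult_left_mono)
    finally show ?thesis .
  qed
  have "\<bar>(g (?p + s *\<^sub>R w) - g ?p) \<bullet> v - s * (v \<bullet> (M x *v w))\<bar> \<le> H * (s * norm w)^2 * norm v + H * (s * norm v) * (s * norm w) * norm v"
    unfolding e1 using b1 b2 by linarith
  also have "\<dots> = s^2 * (H * norm v * norm w * (norm v + norm w))"
    by (simp add: power2_eq_square algebra_simps)
  finally show "\<bar>(g (x + \<sigma> *\<^sub>R v + s *\<^sub>R w) - g (x + \<sigma> *\<^sub>R v)) \<bullet> v - s * (v \<bullet> (M x *v w))\<bar> \<le> s^2 * (H * norm v * norm w * (norm v + norm w))" .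
qed

lemma M_sym_inner: "v \<bullet> (M x *v w) = w \<bullet> (M x *v v)"
proof -
  let ?C = "H * norm v * norm w * (norm v + norm w)"
  have C: "?C \<ge> 0" using H_nn by simp
  have "\<bar>v \<bullet> (M x *v w) - w \<bullet> (M x *v v)\<bar> \<le> 0"
  proof (rule lim_le_lemma[where c="2 * ?C"])
    show "0 \<le> 2 * ?C" using C by simp
    fix t :: real assume t: "0 < t" "t < 1"
    let ?D = "F (x + t *\<^sub>R v + t *\<^sub>R w) - F (x + t *\<^sub>R v) - F (x + t *\<^sub>R w) + F x"
    have a1: "\<bar>?D - t^2 * (v \<bullet> (M x *v w))\<bar> \<le> t^3 * ?C"
      using D_approx[of t x v w] t by (simp add: power2_eq_square power3_eq_cube algebra_simps)
    have e: "x + t *\<^sub>R w + t *\<^sub>R v = x + t *\<^sub>R v + t *\<^sub>R w" by (simp add: algebra_simps)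
    have a2: "\<bar>?D - t^2 * (w \<bullet> (M x *v v))\<bar> \<le> t^3 * ?C"
      using D_approx[of t x w v] t e by (simp add: power2_eq_square power3_eq_cube algebra_simps)
    have "\<bar>t^2 * (v \<bullet> (M x *v w)) - t^2 * (w \<bullet> (M x *v v))\<bar> \<le> 2 * (t^3 * ?C)"
      using a1 a2 by arith
    moreover have "\<bar>t^2 * (v \<bullet> (M x *v w)) - t^2 * (w \<bullet> (M x *v v))\<bar> = t^2 * \<bar>v \<bullet> (M x *v w) - w \<bullet> (M x *v v)\<bar>"
      by (simp add: abs_mult right_diff_distrib[symmetric])
    moreover have "2 * (t^3 * ?C) = t^2 * (t * (2 * ?C))" by (simp add: power3_eq_cube power2_eq_square)
    ultimately have "t^2 * \<bar>v \<bullet> (M x *v w) - w \<bullet> (M x *v v)\<bar> \<le> t^2 * (t * (2 * ?C))" by simp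
    then show "\<bar>v \<bullet> (M x *v w) - w \<bullet> (M x *v v)\<bar> \<le> 0 + t * (2 * ?C)" using t by simp
  qed
  then show ?thesis by simp
qed

lemma M_entry: "(A::'d mat) $ i $ j = axis i 1 \<bullet> (A *v axis j 1)"
  by (simp add: inner_axis' matrix_vector_mult_basis column_def)

lemma sym_ge_star: "sym_ge \<mu> (M xstar)"
  unfolding sym_ge_def
proof (intro conjI allI)
  show "transpose (M xstar) = M xstar"
    unfolding transpose_def by (simp add: vec_eq_iff M_entry[of "M xstar"] M_sym_inner)
  fix v
  have "v \<bullet> ((M xstar - \<mu> *\<^sub>R mat 1) *v v) = v \<bullet> (M xstar *v v) - \<mu> * (norm v)^2"
    by (simp add: matrix_vector_mult_diff_rdistrib inner_diff_right scaleR_matrix_vector_assoc[symmetric] power2_norm_eq_inner)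
  then show "0 \<le> v \<bullet> ((M xstar - \<mu> *\<^sub>R mat 1) *v v)" using psd_star[of v] by simp
qed

end

lemma coeff_rep:
  assumes "is_mat_basis (Bm :: 'd::finite \<Rightarrow> 'd \<Rightarrow> 'd mat)"
  shows "A = (\<Sum>j\<in>UNIV. \<Sum>l\<in>UNIV. coeff Bm A $ j $ l *\<^sub>R Bm j l)"
proof -
  have "\<exists>!c::'d mat. A = (\<Sum>j\<in>UNIV. \<Sum>l\<in>UNIV. c$j$l *\<^sub>R Bm j l)"
    using assms unfolding is_mat_basis_def by blast
  from theI'[OF this] show ?thesis unfolding coeff_def .
qed

lemma norm_sq_sum: "(norm (c::'d::finite mat))^2 = (\<Sum>j\<in>UNIV. \<Sum>l\<in>UNIV. (c $ j $ l)^2)"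
  using frob_eq_norm[of c] unfolding frob_def by (metis (no_types, lifting) real_sqrt_pow2 sum_nonneg zero_le_power2)

lemma pair_sum: "(\<Sum>j\<in>(UNIV::'d::finite set). \<Sum>l\<in>(UNIV::'d set). h j l) = (\<Sum>p\<in>UNIV. h (fst p) (snd p))"
  by (simp add: sum.cartesian_product case_prod_beta UNIV_Times_UNIV[symmetric] del: UNIV_Times_UNIV)

lemma basis_norm_gen:
  fixes Bm :: "'d::finite \<Rightarrow> 'd \<Rightarrow> 'd mat"
  assumes R: "\<And>j l. norm (Bm j l) \<le> R"
  shows "(norm (\<Sum>j\<in>UNIV. \<Sum>l\<in>UNIV. c$j$l *\<^sub>R Bm j l))^2 \<le> real CARD('d)^2 * R^2 * (norm c)^2"
proof -
  have R0: "R \<ge> 0" using R[of undefined undefined] norm_ge_zero order_trans by blast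
  have "norm (\<Sum>j\<in>UNIV. \<Sum>l\<in>UNIV. c$j$l *\<^sub>R Bm j l) \<le> (\<Sum>j\<in>UNIV. norm (\<Sum>l\<in>UNIV. c$j$l *\<^sub>R Bm j l))"
    by (rule norm_sum)
  also have "\<dots> \<le> (\<Sum>j\<in>UNIV. \<Sum>l\<in>UNIV. norm (c$j$l *\<^sub>R Bm j l))"
    by (intro sum_mono norm_sum)
  also have "\<dots> \<le> (\<Sum>j\<in>UNIV. \<Sum>l\<in>UNIV. R * \<bar>c$j$l\<bar>)"
    by (intro sum_mono) (simp add: mult.commute mult_right_mono[OF R abs_ge_zero])
  also have "\<dots> = R * (\<Sum>p\<in>UNIV. \<bar>c $ fst p $ snd p\<bar>)"
    by (simp add: pair_sum sum_distrib_left)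
  finally have n1: "norm (\<Sum>j\<in>UNIV. \<Sum>l\<in>UNIV. c$j$l *\<^sub>R Bm j l) \<le> R * (\<Sum>p\<in>UNIV. \<bar>c $ fst p $ snd p\<bar>)" .
  have "(\<Sum>p\<in>UNIV. \<bar>c $ fst p $ snd p\<bar>)^2 \<le> (\<Sum>p\<in>UNIV. \<bar>c $ fst p $ snd p\<bar>^2) * card (UNIV :: ('d \<times> 'd) set)"
    by (rule sum_squared_le_sum_of_squares)
  also have "\<dots> = (norm c)^2 * real CARD('d)^2"
  proof -
    have s1: "(\<Sum>p\<in>UNIV. \<bar>c $ fst p $ snd p\<bar>^2) = (norm c)^2" by (simp add: norm_sq_sum pair_sum)
    have s2: "real (card (UNIV :: ('d \<times> 'd) set)) = real CARD('d)^2"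
      using card_cartesian_product[of "UNIV::'d set" "UNIV::'d set"] by (simp add: power2_eq_square)
    show ?thesis by (simp only: s1 s2)
  qed
  finally have n2: "(\<Sum>p\<in>UNIV. \<bar>c $ fst p $ snd p\<bar>)^2 \<le> (norm c)^2 * real CARD('d)^2" .
  have "(norm (\<Sum>j\<in>UNIV. \<Sum>l\<in>UNIV. c$j$l *\<^sub>R Bm j l))^2 \<le> (R * (\<Sum>p\<in>UNIV. \<bar>c $ fst p $ snd p\<bar>))^2"
    by (intro power_mono n1) simp
  also have "\<dots> = R^2 * (\<Sum>p\<in>UNIV. \<bar>c $ fst p $ snd p\<bar>)^2" by (simp add: power_mult_distrib)
  also have "\<dots> \<le> R^2 * ((norm c)^2 * real CARD('d)^2)" by (intro mult_left_mono n2) simp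
  finally show ?thesis by (simp add: algebra_simps)
qed

lemma basis_norm_orth:
  fixes Bm :: "'d::finite \<Rightarrow> 'd \<Rightarrow> 'd mat"
  assumes R: "\<And>j l. norm (Bm j l) \<le> R"
    and orth: "\<And>j l j' l'. (j, l) \<noteq> (j', l') \<Longrightarrow> inner (Bm j l) (Bm j' l') = 0"
  shows "(norm (\<Sum>j\<in>UNIV. \<Sum>l\<in>UNIV. c$j$l *\<^sub>R Bm j l))^2 \<le> R^2 * (norm c)^2"
proof -
  have "(norm (\<Sum>j\<in>UNIV. \<Sum>l\<in>UNIV. c$j$l *\<^sub>R Bm j l))^2 = (norm (\<Sum>p\<in>UNIV. c $ fst p $ snd p *\<^sub>R Bm (fst p) (snd p)))^2"
    by (simp add: pair_sum)
  also have "\<dots> = (\<Sum>p\<in>UNIV. (norm (c $ fst p $ snd p *\<^sub>R Bm (fst p) (snd p)))^2)"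
  proof (rule norm_sum_Pythagorean)
    show "pairwise (\<lambda>p q. orthogonal (c $ fst p $ snd p *\<^sub>R Bm (fst p) (snd p)) (c $ fst q $ snd q *\<^sub>R Bm (fst q) (snd q))) UNIV"
      unfolding pairwise_def orthogonal_def
    proof (intro ballI impI)
      fix p q :: "'d \<times> 'd" assume "p \<noteq> q"
      then have "inner (Bm (fst p) (snd p)) (Bm (fst q) (snd q)) = 0"
        using orth[of "fst p" "snd p" "fst q" "snd q"] by (simp add: prod_eq_iff)
      then show "(c $ fst p $ snd p *\<^sub>R Bm (fst p) (snd p)) \<bullet> (c $ fst q $ snd q *\<^sub>R Bm (fst q) (snd q)) = 0"
        by simp
    qed
  qed simp
  also have "\<dots> \<le> (\<Sum>p\<in>UNIV. R^2 * (c $ fst p $ snd p)^2)"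
  proof (intro sum_mono)
    fix p :: "'d \<times> 'd"
    have "(norm (Bm (fst p) (snd p)))^2 \<le> R^2" by (intro power_mono R) simp
    have "(norm (c $ fst p $ snd p *\<^sub>R Bm (fst p) (snd p)))^2 = (c $ fst p $ snd p)^2 * (norm (Bm (fst p) (snd p)))^2"
      by (simp add: power_mult_distrib)
    also have "\<dots> \<le> (c $ fst p $ snd p)^2 * R^2" by (rule mult_left_mono) (fact, simp)
    finally show "(norm (c $ fst p $ snd p *\<^sub>R Bm (fst p) (snd p)))^2 \<le> R^2 * (c $ fst p $ snd p)^2"
      by (simp add: mult.commute)
  qed
  also have "\<dots> = R^2 * (norm c)^2"
    by (simp add: norm_sq_sum pair_sum sum_distrib_left)
  finally show ?thesis .
qed

lemma basis_norm:
  fixes B :: "nat \<Rightarrow> 'd::finite \<Rightarrow> 'd \<Rightarrow> 'd mat"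
  assumes i: "i < n" and R: "\<And>i j l. i < n \<Longrightarrow> frob (B i j l) \<le> R"
  shows "(norm (\<Sum>j\<in>UNIV. \<Sum>l\<in>UNIV. c$j$l *\<^sub>R B i j l))^2 \<le> N_B n B * R^2 * (norm c)^2"
proof (cases "\<forall>i<n. \<forall>j l j' l'. (j, l) \<noteq> (j', l') \<longrightarrow> frob_inner (B i j l) (B i j' l') = 0")
  case True
  then have "(norm (\<Sum>j\<in>UNIV. \<Sum>l\<in>UNIV. c$j$l *\<^sub>R B i j l))^2 \<le> R^2 * (norm c)^2"
    using i R by (intro basis_norm_orth) (auto simp: frob_inner_eq frob_eq_norm)
  then show ?thesis using True unfolding N_B_def by simp
next
  case False
  then have "(norm (\<Sum>j\<in>UNIV. \<Sum>l\<in>UNIV. c$j$l *\<^sub>R B i j l))^2 \<le> real CARD('d)^2 * R^2 * (norm c)^2"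
    using i R by (intro basis_norm_gen) (auto simp: frob_eq_norm)
  moreover have "N_B n B = real CARD('d)^2" unfolding N_B_def using False by (subst if_not_P) auto
  ultimately show ?thesis by simp
qed

lemma N_B_pos: "N_B n B \<ge> 1"
  unfolding N_B_def by auto

lemma Hmat_err:
  fixes B :: "nat \<Rightarrow> 'd::finite \<Rightarrow> 'd \<Rightarrow> 'd mat" and hess :: "nat \<Rightarrow> real^'d \<Rightarrow> 'd mat"
  assumes n: "n \<ge> 1" and basis: "\<And>i. i < n \<Longrightarrow> is_mat_basis (B i)"
    and R: "\<And>i j l. i < n \<Longrightarrow> frob (B i j l) \<le> R"
  shows "(norm (Hmat n B L - hF n hess x))^2 \<le> N_B n B * R^2 * Hcal n L (\<lambda>i. coeff (B i) (hess i x))"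
proof -
  define c where "c i = L i - coeff (B i) (hess i x)" for i
  define S where "S i = (\<Sum>j\<in>UNIV. \<Sum>l\<in>UNIV. c i $ j $ l *\<^sub>R B i j l)" for i
  have Si: "S i = (\<Sum>j\<in>UNIV. \<Sum>l\<in>UNIV. L i $ j $ l *\<^sub>R B i j l) - hess i x" if i: "i < n" for i
  proof -
    have "S i = (\<Sum>j\<in>UNIV. \<Sum>l\<in>UNIV. L i $ j $ l *\<^sub>R B i j l) - (\<Sum>j\<in>UNIV. \<Sum>l\<in>UNIV. coeff (B i) (hess i x) $ j $ l *\<^sub>R B i j l)"
      unfolding S_def c_def by (simp add: sum_subtractf scaleR_diff_left)
    also have "\<dots> = (\<Sum>j\<in>UNIV. \<Sum>l\<in>UNIV. L i $ j $ l *\<^sub>R B i j l) - hess i x"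
      using coeff_rep[OF basis[OF i], of "hess i x"] by simp
    finally show ?thesis .
  qed
  have eq: "Hmat n B L - hF n hess x = (1 / real n) *\<^sub>R (\<Sum>i<n. S i)"
  proof -
    have "Hmat n B L - hF n hess x = (1 / real n) *\<^sub>R (\<Sum>i<n. (\<Sum>j\<in>UNIV. \<Sum>l\<in>UNIV. L i $ j $ l *\<^sub>R B i j l) - hess i x)"
      unfolding Hmat_def hF_def by (simp add: sum_subtractf scaleR_diff_right)
    also have "\<dots> = (1 / real n) *\<^sub>R (\<Sum>i<n. S i)" using Si by simp
    finally show ?thesis .
  qed
  have "norm (Hmat n B L - hF n hess x) \<le> (1 / real n) * (\<Sum>i<n. norm (S i))"
    unfolding eq using norm_sum[of S "{..<n}"] by (simp add: divide_right_mono)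
  then have "(norm (Hmat n B L - hF n hess x))^2 \<le> ((1 / real n) * (\<Sum>i<n. norm (S i)))^2"
    by (intro power_mono) simp_all
  also have "\<dots> = (1 / real n)^2 * (\<Sum>i<n. norm (S i))^2" by (simp only: power_mult_distrib)
  also have "\<dots> \<le> (1 / real n)^2 * ((\<Sum>i<n. (norm (S i))^2) * real n)"
    using sum_squared_le_sum_of_squares[of "\<lambda>i. norm (S i)" "{..<n}"] by (intro mult_left_mono) simp_all
  also have "\<dots> = (1 / real n) * (\<Sum>i<n. (norm (S i))^2)" using n by (simp add: power2_eq_square)
  also have "\<dots> \<le> (1 / real n) * (\<Sum>i<n. N_B n B * R^2 * (norm (c i))^2)"
    unfolding S_def by (intro mult_left_mono sum_mono basis_norm[OF _ R]) auto
  also have "\<dots> = N_B n B * R^2 * Hcal n L (\<lambda>i. coeff (B i) (hess i x))"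
    unfolding Hcal_def c_def by (simp add: sum_distrib_left frob_eq_norm)
  finally show ?thesis .
qed

context blc
begin

lemma newton:
  assumes P: "sym_ge \<mu> P"
  shows "norm ((y - matrix_inv P *v g y) - xstar) \<le> (norm (P - M xstar) + H * norm (y - xstar)) * norm (y - xstar) / \<mu>"
proof -
  let ?e = "y - xstar"
  have inv: "matrix_inv P ** P = mat 1" using sym_ge_inv(1)[OF P mu_pos] .
  have "(y - matrix_inv P *v g y) - xstar = matrix_inv P *v (P *v ?e - g y)"
  proof -
    have "matrix_inv P *v (P *v ?e) = ?e" by (simp add: matrix_vector_mul_assoc inv)
    then show ?thesis by (simp add: matrix_vector_mult_diff_distrib)
  qed
  note eq1 = this
  have eq2: "P *v ?e - g y = (P - M xstar) *v ?e - (g y - g xstar - M xstar *v ?e)"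
    using grad_zero by (simp add: matrix_vector_mult_diff_rdistrib)
  have bnd: "norm ((P - M xstar) *v ?e - (g y - g xstar - M xstar *v ?e)) \<le> (norm (P - M xstar) + H * norm ?e) * norm ?e"
  proof -
    have "norm ((P - M xstar) *v ?e - (g y - g xstar - M xstar *v ?e)) \<le> norm ((P - M xstar) *v ?e) + norm (g y - g xstar - M xstar *v ?e)"
      by (rule norm_triangle_ineq4)
    also have "\<dots> \<le> norm (P - M xstar) * norm ?e + H * (norm ?e)^2"
      by (intro add_mono norm_mv_le tg)
    finally show ?thesis by (simp add: power2_eq_square algebra_simps)
  qed
  have "norm ((y - matrix_inv P *v g y) - xstar) \<le> norm (P *v ?e - g y) / \<mu>"
    unfolding eq1 by (rule sym_ge_inv(3)[OF P mu_pos])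
  also have "\<dots> \<le> (norm (P - M xstar) + H * norm ?e) * norm ?e / \<mu>"
    unfolding eq2 using mu_pos bnd by (intro divide_right_mono) auto
  finally show ?thesis .
qed

lemma proj_close: "norm (proj_mu \<mu> A - M xstar) \<le> 2 * norm (A - M xstar)"
proof -
  have "norm (A - proj_mu \<mu> A) \<le> norm (A - M xstar)" using proj_char sym_ge_star by blast
  then show ?thesis using norm_triangle_ineq[of "proj_mu \<mu> A - A" "A - M xstar"]
    by (simp add: norm_minus_commute)
qed

lemma step_bound:
  assumes "x' = y - matrix_inv (proj_mu \<mu> A) *v g y"
  shows "(norm (x' - xstar))^2 \<le> 2 * (4 * (norm (A - M xstar))^2 + H^2 * (norm (y - xstar))^2) * (norm (y - xstar))^2 / \<mu>^2"
proof -
  let ?r = "norm (y - xstar)" and ?e = "norm (A - M xstar)"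
  have P: "sym_ge \<mu> (proj_mu \<mu> A)" using proj_char by blast
  have "norm (x' - xstar) \<le> (norm (proj_mu \<mu> A - M xstar) + H * ?r) * ?r / \<mu>"
    using newton[OF P, of y] assms by simp
  also have "\<dots> \<le> (2 * ?e + H * ?r) * ?r / \<mu>"
    using proj_close[of A] mu_pos by (intro divide_right_mono mult_right_mono add_mono) auto
  finally have a: "norm (x' - xstar) \<le> (2 * ?e + H * ?r) * ?r / \<mu>" .
  have "(norm (x' - xstar))^2 \<le> ((2 * ?e + H * ?r) * ?r / \<mu>)^2"
    by (intro power_mono a) simp
  also have "\<dots> = (2 * ?e + H * ?r)^2 * ?r^2 / \<mu>^2" by (simp add: power_mult_distrib power_divide)
  also have "\<dots> \<le> 2 * (4 * ?e^2 + H^2 * ?r^2) * ?r^2 / \<mu>^2"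
  proof -
    have "(2 * ?e + H * ?r)^2 \<le> 2 * (4 * ?e^2 + H^2 * ?r^2)"
      using zero_le_power2[of "2 * ?e - H * ?r"]
      by (simp only: power2_eq_square algebra_simps)
    then show ?thesis by (intro divide_right_mono mult_right_mono) simp_all
  qed
  finally show ?thesis .
qed

end

lemma young:
  fixes x y :: "'a::real_inner"
  assumes "\<beta> > 0"
  shows "(norm (x + y))^2 \<le> (1 + \<beta>) * (norm x)^2 + (1 + 1 / \<beta>) * (norm y)^2"
proof -
  have "0 \<le> (norm (\<beta> *\<^sub>R x - y))^2" by simp
  also have "\<dots> = \<beta>^2 * (norm x)^2 - 2 * \<beta> * (x \<bullet> y) + (norm y)^2"
    by (simp only: power2_norm_eq_inner) (simp add: inner_diff_left inner_diff_right inner_commute power2_eq_square algebra_simps)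
  finally have "2 * \<beta> * (x \<bullet> y) \<le> \<beta> * (\<beta> * (norm x)^2 + (norm y)^2 / \<beta>)"
    using assms by (simp add: power2_eq_square algebra_simps)
  then have xy: "2 * (x \<bullet> y) \<le> \<beta> * (norm x)^2 + (norm y)^2 / \<beta>"
    using assms by (simp add: mult.assoc)
  have "(norm (x + y))^2 = (norm x)^2 + 2 * (x \<bullet> y) + (norm y)^2"
    by (simp add: power2_norm_eq_inner inner_add_left inner_add_right inner_commute)
  also have "\<dots> \<le> (1 + \<beta>) * (norm x)^2 + (1 + 1 / \<beta>) * (norm y)^2"
    using xy by (simp add: algebra_simps)
  finally show ?thesis .
qed

lemma coef_ineq:
  fixes d :: real
  assumes "0 < d" "d \<le> 1"
  shows "((1 + 2 / d) + (1 + d / 2) * (1 - d) * (1 + 4 / d)) * ((d / 4) / (6 / d - 7 / 2))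
         + (1 + d / 2) * (1 - d) * (1 + d / 4) \<le> 1"
proof -
  have den: "24 - 14 * d > 0" using assms by simp
  have q: "(d / 4) / (6 / d - 7 / 2) = d^2 / (24 - 14 * d)"
    using assms den by (simp add: field_simps power2_eq_square)
  have ca: "(1 + 2 / d) + (1 + d / 2) * (1 - d) * (1 + 4 / d) = (12 - 5 * d^2 - d^3) / (2 * d)"
    using assms by (simp add: field_simps power2_eq_square power3_eq_cube)
  have "(12 - 5 * d^2 - d^3) / (2 * d) * (d^2 / (24 - 14 * d)) = (12 * d - 5 * d^3 - d^4) / (2 * (24 - 14 * d))"
    using assms den by (simp add: field_simps power2_eq_square power3_eq_cube power4_eq_xxxx)
  note c1 = this
  have c2: "(12 * d - 5 * d^3 - d^4) / (2 * (24 - 14 * d)) \<le> d / 4 + 5 * d^2 / 8 + d^3 / 8"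
  proof -
    have dd: "d * d \<le> 1" using assms mult_le_one[of d d] by simp
    have p: "0 \<le> d^2 * (92 - 26 * d - 10 * d^2)" using assms dd
      by (intro mult_nonneg_nonneg) (auto simp: power2_eq_square)
    have "4 * (12 * d - 5 * d^3 - d^4) \<le> (2 * d + 5 * d^2 + d^3) * (24 - 14 * d)"
      using p by (simp add: algebra_simps power2_eq_square power3_eq_cube power4_eq_xxxx)
    then show ?thesis using den by (simp add: field_simps)
  qed
  have cb: "(1 + d / 2) * (1 - d) * (1 + d / 4) = 1 - d / 4 - 5 * d^2 / 8 - d^3 / 8"
    by (simp add: field_simps power2_eq_square power3_eq_cube)
  show ?thesis unfolding q ca cb using c1 c2 by linarith
qed

definition ca :: "real \<Rightarrow> real" where "ca \<delta> = (1 + 2 / \<delta>) + (1 + \<delta> / 2) * (1 - \<delta>) * (1 + 4 / \<delta>)"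
definition cb :: "real \<Rightarrow> real" where "cb \<delta> = (1 + \<delta> / 2) * (1 - \<delta>) * (1 + \<delta> / 4)"

lemma ca_nn: "0 < \<delta> \<Longrightarrow> \<delta> \<le> 1 \<Longrightarrow> ca \<delta> \<ge> 0"
  unfolding ca_def by (intro add_nonneg_nonneg mult_nonneg_nonneg) auto
lemma cb_nn: "0 < \<delta> \<Longrightarrow> \<delta> \<le> 1 \<Longrightarrow> cb \<delta> \<ge> 0"
  unfolding cb_def by (intro mult_nonneg_nonneg) auto
lemma cacb: "0 < \<delta> \<Longrightarrow> \<delta> \<le> 1 \<Longrightarrow> ca \<delta> * ((\<delta> / 4) / (6 / \<delta> - 7 / 2)) + cb \<delta> \<le> 1"
  unfolding ca_def cb_def by (rule coef_ineq)

lemma contr_lin: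
  fixes a b e :: "'a::real_inner"
  assumes d: "0 < \<delta>" "\<delta> \<le> 1" and e: "(norm e)^2 \<le> (1 - \<delta>) * (norm (a - b))^2"
  shows "(norm (a - e))^2 \<le> ca \<delta> * (norm a)^2 + cb \<delta> * (norm b)^2"
proof -
  let ?s = "(norm a)^2" and ?t = "(norm b)^2"
  have y1: "(norm (a - e))^2 \<le> (1 + 2 / \<delta>) * ?s + (1 + \<delta> / 2) * (norm e)^2"
    using young[of "2 / \<delta>" a "- e"] d by simp
  have y2: "(norm (a - b))^2 \<le> (1 + 4 / \<delta>) * ?s + (1 + \<delta> / 4) * ?t"
    using young[of "4 / \<delta>" a "- b"] d by simp
  have "(norm e)^2 \<le> (1 - \<delta>) * ((1 + 4 / \<delta>) * ?s + (1 + \<delta> / 4) * ?t)"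
    using e y2 d by (meson diff_ge_0_iff_ge mult_left_mono order_trans)
  then have "(1 + \<delta> / 2) * (norm e)^2 \<le> (1 + \<delta> / 2) * ((1 - \<delta>) * ((1 + 4 / \<delta>) * ?s + (1 + \<delta> / 4) * ?t))"
    using d by (intro mult_left_mono) auto
  then have "(norm (a - e))^2 \<le> (1 + 2 / \<delta>) * ?s + (1 + \<delta> / 2) * ((1 - \<delta>) * ((1 + 4 / \<delta>) * ?s + (1 + \<delta> / 4) * ?t))"
    using y1 by linarith
  also have "\<dots> = ca \<delta> * ?s + cb \<delta> * ?t" unfolding ca_def cb_def using d by (simp add: field_simps)
  finally show ?thesis .
qed

lemma contr_step:
  fixes a b e :: "'a::real_inner"
  assumes d: "0 < \<delta>" "\<delta> \<le> 1" and e: "(norm e)^2 \<le> (1 - \<delta>) * (norm (a - b))^2"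
    and b: "(norm b)^2 \<le> K" and a: "(norm a)^2 \<le> (\<delta> / 4) / (6 / \<delta> - 7 / 2) * K"
  shows "(norm (a - e))^2 \<le> K"
proof -
  have K: "K \<ge> 0" using b order_trans zero_le_power2 by blast
  have "(norm (a - e))^2 \<le> ca \<delta> * (norm a)^2 + cb \<delta> * (norm b)^2" by (rule contr_lin[OF d e])
  also have "\<dots> \<le> ca \<delta> * ((\<delta> / 4) / (6 / \<delta> - 7 / 2) * K) + cb \<delta> * K"
    by (intro add_mono mult_left_mono a b ca_nn cb_nn d)
  also have "\<dots> = (ca \<delta> * ((\<delta> / 4) / (6 / \<delta> - 7 / 2)) + cb \<delta>) * K" by (simp add: algebra_simps)
  also have "\<dots> \<le> 1 * K" by (intro mult_right_mono cacb d K)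
  finally show ?thesis by simp
qed

lemma norm_sq_vec: "(norm (v::real^'d::finite))^2 = (\<Sum>j\<in>UNIV. (v $ j)^2)"
  unfolding norm_vec_def L2_set_def by (simp add: sum_nonneg)

lemma cc_sq:
  assumes cc: "convex_comb_of y k a" and bnd: "\<forall>t\<le>k. (a t - b)^2 \<le> Q"
  shows "(y - b)^2 \<le> Q"
proof -
  obtain c where c0: "\<forall>t\<le>k. c t \<ge> 0" and c1: "(\<Sum>t\<le>k. c t) = 1" and cy: "y = (\<Sum>t\<le>k. c t * a t)"
    using cc unfolding convex_comb_of_def by blast
  have Q0: "Q \<ge> 0" using bnd[rule_format, of 0] zero_le_power2 order_trans by blast
  have ab: "\<bar>a t - b\<bar> \<le> sqrt Q" if "t \<le> k" for t
    using bnd that real_le_rsqrt[of "\<bar>a t - b\<bar>" Q] by simp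
  have "y - b = (\<Sum>t\<le>k. c t * (a t - b))"
    using cy c1 by (simp add: right_diff_distrib sum_subtractf sum_distrib_right[symmetric])
  then have "\<bar>y - b\<bar> \<le> (\<Sum>t\<le>k. \<bar>c t * (a t - b)\<bar>)" by (simp add: sum_abs)
  also have "\<dots> \<le> (\<Sum>t\<le>k. c t * sqrt Q)"
    using c0 ab by (intro sum_mono) (simp add: abs_mult mult_left_mono)
  also have "\<dots> = sqrt Q" using c1 by (simp add: sum_distrib_right[symmetric])
  finally have "\<bar>y - b\<bar> \<le> sqrt Q" .
  then have "\<bar>y - b\<bar>^2 \<le> (sqrt Q)^2" by (intro power_mono) simp_all
  then show ?thesis using Q0 by simp
qed

lemma zbound:
  fixes x z :: "nat \<Rightarrow> real^'d::finite"
  assumes cc: "\<forall>j. convex_comb_of (z k $ j) k (\<lambda>t. x t $ j)" and xb: "\<forall>t\<le>k. (norm (x t - xs))^2 \<le> c"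
  shows "(norm (z k - xs))^2 \<le> real CARD('d) * c"
proof -
  have "((z k - xs) $ j)^2 \<le> c" for j
  proof -
    have "\<forall>t\<le>k. (x t $ j - xs $ j)^2 \<le> c"
    proof (intro allI impI)
      fix t assume "t \<le> k"
      have "\<bar>(x t - xs) $ j\<bar> \<le> norm (x t - xs)" by (rule component_le_norm_cart)
      then have "\<bar>(x t - xs) $ j\<bar>^2 \<le> (norm (x t - xs))^2" by (intro power_mono) simp_all
      then have "(x t $ j - xs $ j)^2 \<le> (norm (x t - xs))^2" by simp
      moreover have "(norm (x t - xs))^2 \<le> c" using xb \<open>t \<le> k\<close> by simp
      ultimately show "(x t $ j - xs $ j)^2 \<le> c" by linarith
    qed
    from cc_sq[OF cc[rule_format, of j] this] show ?thesis by simp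
  qed
  then have "(\<Sum>j\<in>UNIV. ((z k - xs) $ j)^2) \<le> (\<Sum>j\<in>(UNIV::'d set). c)" by (intro sum_mono) simp
  then show ?thesis by (simp add: norm_sq_vec[of "z k - xs"])
qed

lemma Lbound:
  fixes B :: "nat \<Rightarrow> 'd::finite \<Rightarrow> 'd \<Rightarrow> 'd mat" and hess :: "nat \<Rightarrow> real^'d \<Rightarrow> 'd mat"
  assumes n: "n \<ge> 1"
    and cc: "\<forall>i j l. i < n \<longrightarrow> convex_comb_of (Lk i $ j $ l) k (\<lambda>t. coeff (B i) (hess i (z t)) $ j $ l)"
    and zb: "\<forall>t\<le>k. (norm (z t - xs))^2 \<le> Z"
    and lip: "\<And>i x y j l. i < n \<Longrightarrow> \<bar>coeff (B i) (hess i x) $ j $ l - coeff (B i) (hess i y) $ j $ l\<bar> \<le> M2 * norm (x - y)"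
    and M2: "M2 \<ge> 0"
  shows "Hcal n Lk (\<lambda>i. coeff (B i) (hess i xs)) \<le> real CARD('d)^2 * M2^2 * Z"
proof -
  have fi: "(frob (Lk i - coeff (B i) (hess i xs)))^2 \<le> real CARD('d)^2 * M2^2 * Z" if i: "i < n" for i
  proof -
    have e: "((Lk i - coeff (B i) (hess i xs)) $ j $ l)^2 \<le> M2^2 * Z" for j l
    proof -
      have "\<forall>t\<le>k. (coeff (B i) (hess i (z t)) $ j $ l - coeff (B i) (hess i xs) $ j $ l)^2 \<le> M2^2 * Z"
      proof (intro allI impI)
        fix t assume t: "t \<le> k"
        have "\<bar>coeff (B i) (hess i (z t)) $ j $ l - coeff (B i) (hess i xs) $ j $ l\<bar> \<le> M2 * norm (z t - xs)"
          by (rule lip[OF i])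
        then have "\<bar>coeff (B i) (hess i (z t)) $ j $ l - coeff (B i) (hess i xs) $ j $ l\<bar>^2 \<le> (M2 * norm (z t - xs))^2"
          by (intro power_mono) simp_all
        also have "\<dots> = M2^2 * (norm (z t - xs))^2" by (simp add: power_mult_distrib)
        also have "\<dots> \<le> M2^2 * Z" using zb t by (intro mult_left_mono) simp_all
        finally show "(coeff (B i) (hess i (z t)) $ j $ l - coeff (B i) (hess i xs) $ j $ l)^2 \<le> M2^2 * Z" by simp
      qed
      from cc_sq[OF cc[rule_format, OF i] this] show ?thesis by simp
    qed
    have "(frob (Lk i - coeff (B i) (hess i xs)))^2 = (\<Sum>j\<in>UNIV. \<Sum>l\<in>UNIV. ((Lk i - coeff (B i) (hess i xs)) $ j $ l)^2)"
      by (simp add: frob_eq_norm norm_sq_sum)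
    also have "\<dots> \<le> (\<Sum>j\<in>(UNIV::'d set). \<Sum>l\<in>(UNIV::'d set). M2^2 * Z)"
      by (intro sum_mono e)
    also have "\<dots> = real CARD('d)^2 * M2^2 * Z" by (simp add: power2_eq_square)
    finally show ?thesis .
  qed
  have "Hcal n Lk (\<lambda>i. coeff (B i) (hess i xs)) \<le> (1 / real n) * (\<Sum>i<n. real CARD('d)^2 * M2^2 * Z)"
    unfolding Hcal_def by (intro mult_left_mono sum_mono fi) auto
  also have "\<dots> = real CARD('d)^2 * M2^2 * Z" using n by simp
  finally show ?thesis .
qed

lemma w_hist:
  assumes "w 0 = z 0" "\<forall>k. w (Suc k) = (if \<xi> k then z k else w k)"
  shows "\<exists>t\<le>k. w k = z t"
proof (induction k)
  case 0 then show ?case using assms(1) by auto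
next
  case (Suc k)
  then obtain t where "t \<le> k" "w k = z t" by blast
  then show ?case using assms(2) by (cases "\<xi> k") (auto intro: le_SucI)
qed

lemma w_hist2:
  assumes "w 0 = z 0" "\<forall>k. w (Suc k) = (if \<xi> k then z k else w k)"
  shows "\<exists>t\<le>k. w (Suc k) = z t"
  using w_hist[OF assms, of k] assms(2) by (cases "\<xi> k") auto

context blc
begin

lemma x_step:
  assumes run: "BL1_run n B grad hess \<mu> \<alpha> \<eta> p Q C x z w L \<xi> gg"
  shows "x (Suc k) = w (Suc k) - matrix_inv (proj_mu \<mu> (Hmat n B (L k))) *v g (w (Suc k))"
proof -
  let ?P = "proj_mu \<mu> (Hmat n B (L k))"
  have P: "sym_ge \<mu> ?P" using proj_char by blast
  have inv: "matrix_inv ?P ** ?P = mat 1" by (rule sym_ge_inv(1)[OF P mu_pos])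
  have w: "w (Suc k) = (if \<xi> k then z k else w k)"
    and gk: "gg k = (if \<xi> k then g (z k) else ?P *v (z k - w k) + g (w k))"
    and xk: "x (Suc k) = z k - matrix_inv ?P *v gg k"
    using run unfolding BL1_run_def by blast+
  show ?thesis
  proof (cases "\<xi> k")
    case True then show ?thesis using w gk xk by simp
  next
    case False
    have "matrix_inv ?P *v (?P *v (z k - w k)) = z k - w k" by (simp add: matrix_vector_mul_assoc inv)
    then show ?thesis using False w gk xk by (simp add: matrix_vector_right_distrib)
  qed
qed

lemma newton_sq:
  assumes run: "BL1_run n B grad hess \<mu> \<alpha> \<eta> p Q C x z w L \<xi> gg"
    and basis: "\<And>i. i < n \<Longrightarrow> is_mat_basis (B i)"
    and R: "\<And>i j l. i < n \<Longrightarrow> frob (B i j l) \<le> R"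
  shows "(norm (x (Suc k) - xstar))^2 \<le> 2 * (4 * (N_B n B * R^2 * Hcal n (L k) (\<lambda>i. coeff (B i) (hess i xstar)))
            + H^2 * (norm (w (Suc k) - xstar))^2) * (norm (w (Suc k) - xstar))^2 / \<mu>^2"
proof -
  have "(norm (x (Suc k) - xstar))^2 \<le> 2 * (4 * (norm (Hmat n B (L k) - M xstar))^2 + H^2 * (norm (w (Suc k) - xstar))^2) * (norm (w (Suc k) - xstar))^2 / \<mu>^2"
    by (rule step_bound[OF x_step[OF run]])
  also have "\<dots> \<le> 2 * (4 * (N_B n B * R^2 * Hcal n (L k) (\<lambda>i. coeff (B i) (hess i xstar)))
            + H^2 * (norm (w (Suc k) - xstar))^2) * (norm (w (Suc k) - xstar))^2 / \<mu>^2"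
    using Hmat_err[OF n_pos basis R, where L="L k" and x=xstar and hess=hess]
    by (intro divide_right_mono mult_right_mono mult_left_mono add_mono) auto
  finally show ?thesis .
qed

end

lemma arith_i1:
  fixes d \<mu> NB R M2 c1 Hc :: real
  assumes d: "d \<ge> 1" and mu: "\<mu> > 0" and NB: "NB \<ge> 1" and R: "R > 0" and M2: "M2 > 0"
    and c1: "c1 \<le> \<mu>^2 / (16 * d^4 * NB * R^2 * M2^2)"
    and Hc: "Hc \<le> d^2 * M2^2 * (d * c1)"
  shows "Hc \<le> \<mu>^2 / (16 * d * NB * R^2)"
proof -
  have "d^2 * M2^2 * (d * c1) \<le> d^2 * M2^2 * (d * (\<mu>^2 / (16 * d^4 * NB * R^2 * M2^2)))"
    using d by (intro mult_left_mono c1) auto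
  also have "\<dots> = \<mu>^2 / (16 * d * NB * R^2)"
    using d NB R M2 by (simp add: field_simps power2_eq_square power4_eq_xxxx)
  finally show ?thesis using Hc by linarith
qed

lemma arith_i2:
  fixes d \<mu> H NB R c1 Hc r2 X :: real
  assumes d: "d \<ge> 1" and mu: "\<mu> > 0" and H: "H > 0" and NB: "NB \<ge> 1" and R: "R > 0"
    and c1: "c1 \<le> \<mu>^2 / (4 * d^2 * H^2)"
    and Hc: "Hc \<le> \<mu>^2 / (16 * d * NB * R^2)"
    and r2: "0 \<le> r2" "r2 \<le> d * c1"
    and X: "X \<le> 2 * (4 * (NB * R^2 * Hc) + H^2 * r2) * r2 / \<mu>^2"
  shows "X \<le> c1"
proof -
  have a: "4 * (NB * R^2 * Hc) \<le> \<mu>^2 / (4 * d)"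
  proof -
    have "4 * (NB * R^2 * Hc) \<le> 4 * (NB * R^2 * (\<mu>^2 / (16 * d * NB * R^2)))"
      using NB R by (intro mult_left_mono Hc) auto
    also have "\<dots> = \<mu>^2 / (4 * d)" using NB R d by (simp add: field_simps power2_eq_square)
    finally show ?thesis .
  qed
  have b: "H^2 * r2 \<le> \<mu>^2 / (4 * d)"
  proof -
    have "d * c1 \<le> d * (\<mu>^2 / (4 * d^2 * H^2))" using c1 d by (intro mult_left_mono) auto
    then have "r2 \<le> d * (\<mu>^2 / (4 * d^2 * H^2))" using r2 by linarith
    then have "H^2 * r2 \<le> H^2 * (d * (\<mu>^2 / (4 * d^2 * H^2)))" by (intro mult_left_mono) auto
    also have "\<dots> = \<mu>^2 / (4 * d)" using H d by (simp add: field_simps power2_eq_square)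
    finally show ?thesis .
  qed
  have "2 * (4 * (NB * R^2 * Hc) + H^2 * r2) \<le> \<mu>^2 / d" using a b by (simp add: field_simps)
  then have "2 * (4 * (NB * R^2 * Hc) + H^2 * r2) * r2 / \<mu>^2 \<le> (\<mu>^2 / d) * r2 / \<mu>^2"
    using r2 mu by (intro divide_right_mono mult_right_mono) auto
  also have "\<dots> = r2 / d" using mu by simp
  also have "\<dots> \<le> c1" using r2 d by (simp add: field_simps)
  finally show ?thesis using X by linarith
qed

lemma arith_ii1:
  fixes dM \<mu> H NB R c2 Hc r2 X :: real
  assumes dM: "0 < dM" "dM \<le> 1" and mu: "\<mu> > 0" and H: "H > 0" and NB: "NB \<ge> 1" and R: "R > 0"
    and c2: "c2 \<le> (dM / 4) * \<mu>^2 / (4 * H^2 * (6 / dM - 7 / 2))"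
    and Hc: "Hc \<le> (dM / 4) * \<mu>^2 / (16 * NB * R^2 * (6 / dM - 7 / 2))"
    and r2: "0 \<le> r2" "r2 \<le> c2"
    and X: "X \<le> 2 * (4 * (NB * R^2 * Hc) + H^2 * r2) * r2 / \<mu>^2"
  shows "X \<le> (dM / 4) / (6 / dM - 7 / 2) * c2"
proof -
  define q where "q = (dM / 4) / (6 / dM - 7 / 2)"
  have BM: "6 / dM - 7 / 2 > 0"
  proof -
    have "6 / dM \<ge> 6" using dM by (simp add: field_simps)
    then show ?thesis by simp
  qed
  have q0: "q > 0" unfolding q_def using BM dM by simp
  have a: "4 * (NB * R^2 * Hc) \<le> q * \<mu>^2 / 4"
  proof -
    have "4 * (NB * R^2 * Hc) \<le> 4 * (NB * R^2 * ((dM / 4) * \<mu>^2 / (16 * NB * R^2 * (6 / dM - 7 / 2))))"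
      using NB R by (intro mult_left_mono Hc) auto
    also have "\<dots> = q * \<mu>^2 / 4" unfolding q_def using NB R BM dM by (simp add: field_simps power2_eq_square)
    finally show ?thesis .
  qed
  have b: "H^2 * r2 \<le> q * \<mu>^2 / 4"
  proof -
    have "H^2 * r2 \<le> H^2 * ((dM / 4) * \<mu>^2 / (4 * H^2 * (6 / dM - 7 / 2)))"
      using r2 c2 by (intro mult_left_mono) auto
    also have "\<dots> = q * \<mu>^2 / 4" unfolding q_def using H BM dM by (simp add: field_simps power2_eq_square)
    finally show ?thesis .
  qed
  have "2 * (4 * (NB * R^2 * Hc) + H^2 * r2) \<le> q * \<mu>^2" using a b by simp
  then have "2 * (4 * (NB * R^2 * Hc) + H^2 * r2) * r2 / \<mu>^2 \<le> (q * \<mu>^2) * r2 / \<mu>^2"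
    using r2 mu by (intro divide_right_mono mult_right_mono) auto
  also have "\<dots> = q * r2" using mu by simp
  also have "\<dots> \<le> q * c2" using r2 q0 by (intro mult_left_mono) auto
  finally show ?thesis using X unfolding q_def by linarith
qed

lemma arith_ii2:
  fixes d dM \<mu> NB R M1 c2 :: real
  assumes d: "0 < d" "d \<le> 1" and dM: "0 < dM" "dM \<le> 1" and NB: "NB \<ge> 1" and R: "R > 0" and M1: "M1 > 0"
    and c2: "c2 \<le> (d / 4) * (dM / 4) * \<mu>^2 / (16 * NB * R^2 * (6 / dM - 7 / 2) * (6 / d - 7 / 2) * M1^2)"
  shows "M1^2 * c2 \<le> (d / 4) / (6 / d - 7 / 2) * ((dM / 4) * \<mu>^2 / (16 * NB * R^2 * (6 / dM - 7 / 2)))"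
proof -
  have BM: "6 / dM - 7 / 2 > 0"
  proof -
    have "6 / dM \<ge> 6" using dM by (simp add: field_simps)
    then show ?thesis by simp
  qed
  have Bd: "6 / d - 7 / 2 > 0"
  proof -
    have "6 / d \<ge> 6" using d by (simp add: field_simps)
    then show ?thesis by simp
  qed
  define bM where "bM = 6 / dM - 7 / 2"
  define bd where "bd = 6 / d - 7 / 2"
  have bM: "bM > 0" and bd: "bd > 0" using BM Bd unfolding bM_def bd_def by auto
  have "M1^2 * c2 \<le> M1^2 * ((d / 4) * (dM / 4) * \<mu>^2 / (16 * NB * R^2 * bM * bd * M1^2))"
    using c2 unfolding bM_def[symmetric] bd_def[symmetric] by (intro mult_left_mono) simp_all
  also have "\<dots> = (d / 4) / bd * ((dM / 4) * \<mu>^2 / (16 * NB * R^2 * bM))"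
    using M1 bM bd NB R by (simp add: field_simps)
  finally show ?thesis unfolding bM_def bd_def .
qed

context blc
begin

lemma part_i:
  fixes B :: "nat \<Rightarrow> 'd \<Rightarrow> 'd \<Rightarrow> 'd mat"
  assumes basis: "\<And>i. i < n \<Longrightarrow> is_mat_basis (B i)"
    and Rpos: "R > 0" and M2pos: "M2 > 0" and Hpos: "H > 0"
    and Lip_M2: "\<And>i x y j l. i < n \<Longrightarrow>
                   \<bar>coeff (B i) (hess i x) $ j $ l - coeff (B i) (hess i y) $ j $ l\<bar> \<le> M2 * norm (x - y)"
    and basis_R: "\<And>i j l. i < n \<Longrightarrow> frob (B i j l) \<le> R"
    and run: "BL1_run n B grad hess \<mu> \<alpha> \<eta> p Q C x z w L \<xi> gg"
    and zcc: "\<forall>j k. convex_comb_of (z k $ j) k (\<lambda>t. x t $ j)"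
    and Lcc: "\<forall>i j l k. i < n \<longrightarrow> convex_comb_of (L k i $ j $ l) k (\<lambda>t. coeff (B i) (hess i (z t)) $ j $ l)"
    and x0: "(norm (x 0 - xstar))^2 \<le> c1"
    and c1def: "c1 = min (\<mu>^2 / (4 * real CARD('d)^2 * H^2)) (\<mu>^2 / (16 * real CARD('d)^4 * N_B n B * R^2 * M2^2))"
  shows "(norm (z k - xstar))^2 \<le> real CARD('d) * c1 \<and>
         Hcal n (L k) (\<lambda>i. coeff (B i) (hess i xstar)) \<le> \<mu>^2 / (16 * real CARD('d) * N_B n B * R^2)"
proof -
  have d1: "real CARD('d) \<ge> 1" by simp
  have NB: "N_B n B \<ge> 1" by (rule N_B_pos)
  have c1a: "c1 \<le> \<mu>^2 / (4 * real CARD('d)^2 * H^2)" and c1b: "c1 \<le> \<mu>^2 / (16 * real CARD('d)^4 * N_B n B * R^2 * M2^2)"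
    unfolding c1def by simp_all
  have w0: "w 0 = z 0" and wS: "\<forall>k. w (Suc k) = (if \<xi> k then z k else w k)"
    using run unfolding BL1_run_def by auto
  have zb: "(norm (z k - xstar))^2 \<le> real CARD('d) * c1" if "\<forall>t\<le>k. (norm (x t - xstar))^2 \<le> c1" for k
    using zbound[of z k x xstar c1] zcc that by blast
  have Hb: "Hcal n (L k) (\<lambda>i. coeff (B i) (hess i xstar)) \<le> \<mu>^2 / (16 * real CARD('d) * N_B n B * R^2)"
    if "\<forall>t\<le>k. (norm (x t - xstar))^2 \<le> c1" for k
  proof -
    have zbs: "\<forall>t\<le>k. (norm (z t - xstar))^2 \<le> real CARD('d) * c1"
      using zb that by auto
    have "Hcal n (L k) (\<lambda>i. coeff (B i) (hess i xstar)) \<le> real CARD('d)^2 * M2^2 * (real CARD('d) * c1)"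
      by (rule Lbound[OF n_pos _ zbs Lip_M2]) (use Lcc M2pos in auto)
    then show ?thesis by (rule arith_i1[OF d1 mu_pos NB Rpos M2pos c1b])
  qed
  have inv: "\<forall>t\<le>k. (norm (x t - xstar))^2 \<le> c1" for k
  proof (induction k)
    case 0 then show ?case using x0 by simp
  next
    case (Suc k)
    obtain t0 where t0: "t0 \<le> k" "w (Suc k) = z t0" using w_hist2[OF w0 wS] by blast
    have r2: "(norm (w (Suc k) - xstar))^2 \<le> real CARD('d) * c1"
      using zb[of t0] Suc.IH t0 by auto
    have "(norm (x (Suc k) - xstar))^2 \<le> c1"
      by (rule arith_i2[OF d1 mu_pos Hpos NB Rpos c1a Hb[OF Suc.IH] _ r2 newton_sq[OF run basis basis_R]]) simp
    then show ?case using Suc.IH le_Suc_eq by auto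
  qed
  show ?thesis using zb[OF inv] Hb[OF inv] by simp
qed

lemma part_ii:
  fixes B :: "nat \<Rightarrow> 'd \<Rightarrow> 'd \<Rightarrow> 'd mat"
  assumes basis: "\<And>i. i < n \<Longrightarrow> is_mat_basis (B i)"
    and Rpos: "R > 0" and M1pos: "M1 > 0" and Hpos: "H > 0"
    and Lip_M1: "\<And>i x y. i < n \<Longrightarrow> frob (coeff (B i) (hess i x) - coeff (B i) (hess i y)) \<le> M1 * norm (x - y)"
    and basis_R: "\<And>i j l. i < n \<Longrightarrow> frob (B i j l) \<le> R"
    and detQ: "\<forall>k. deterministic (Q k) \<and> contraction_vec \<delta>M (Q k)"
    and detC: "\<forall>k i. i < n \<longrightarrow> deterministic (C k i) \<and> contraction_mat \<delta> (C k i)"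
    and run: "BL1_run n B grad hess \<mu> 1 1 p Q C x z w L \<xi> gg"
    and z0: "(norm (z 0 - xstar))^2 \<le> c2"
    and H0: "Hcal n (L 0) (\<lambda>i. coeff (B i) (hess i xstar)) \<le> Hb"
    and c2def: "c2 = min ((\<delta>M / 4) * \<mu>^2 / (4 * H^2 * (6 / \<delta>M - 7 / 2)))
              ((\<delta> / 4) * (\<delta>M / 4) * \<mu>^2 /
                 (16 * N_B n B * R^2 * (6 / \<delta>M - 7 / 2) * (6 / \<delta> - 7 / 2) * M1^2))"
    and Hbdef: "Hb = (\<delta>M / 4) * \<mu>^2 / (16 * N_B n B * R^2 * (6 / \<delta>M - 7 / 2))"
  shows "(norm (z k - xstar))^2 \<le> c2 \<and> Hcal n (L k) (\<lambda>i. coeff (B i) (hess i xstar)) \<le> Hb"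
proof -
  let ?Ls = "\<lambda>i. coeff (B i) (hess i xstar)"
  have NB: "N_B n B \<ge> 1" by (rule N_B_pos)
  have dM: "0 < \<delta>M" "\<delta>M \<le> 1" using detQ unfolding contraction_vec_def by auto
  have dd: "0 < \<delta>" "\<delta> \<le> 1" using detC n_pos unfolding contraction_mat_def by auto
  have c2a: "c2 \<le> (\<delta>M / 4) * \<mu>^2 / (4 * H^2 * (6 / \<delta>M - 7 / 2))"
    and c2b: "c2 \<le> (\<delta> / 4) * (\<delta>M / 4) * \<mu>^2 / (16 * N_B n B * R^2 * (6 / \<delta>M - 7 / 2) * (6 / \<delta> - 7 / 2) * M1^2)"
    unfolding c2def by simp_all
  have w0: "w 0 = z 0" and wS: "\<forall>k. w (Suc k) = (if \<xi> k then z k else w k)"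
    using run unfolding BL1_run_def by auto
  have inv: "(\<forall>t\<le>k. (norm (z t - xstar))^2 \<le> c2) \<and> Hcal n (L k) ?Ls \<le> Hb" for k
  proof (induction k)
    case 0 then show ?case using z0 H0 by simp
  next
    case (Suc k)
    then have IHz: "\<forall>t\<le>k. (norm (z t - xstar))^2 \<le> c2" and IHH: "Hcal n (L k) ?Ls \<le> Hb" by auto
    obtain t0 where t0: "t0 \<le> k" "w (Suc k) = z t0" using w_hist2[OF w0 wS] by blast
    have r2: "(norm (w (Suc k) - xstar))^2 \<le> c2" using IHz t0 by auto
    have xb: "(norm (x (Suc k) - xstar))^2 \<le> (\<delta>M / 4) / (6 / \<delta>M - 7 / 2) * c2"
      by (rule arith_ii1[OF dM mu_pos Hpos NB Rpos c2a IHH[unfolded Hbdef] _ r2 newton_sq[OF run basis basis_R]]) simp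
    have zk: "(norm (z k - xstar))^2 \<le> c2" using IHz by simp
    obtain q where q: "q \<in> set_pmf (Q k (x (Suc k) - z k))" "z (Suc k) = z k + 1 *\<^sub>R q"
      using run unfolding BL1_run_def by blast
    obtain cQ where cQ: "\<forall>a. Q k a = return_pmf (cQ a)" using detQ unfolding deterministic_def by blast
    have qv: "q = cQ (x (Suc k) - z k)" using q(1) cQ by simp
    have contrQ: "(norm ((x (Suc k) - z k) - q))^2 \<le> (1 - \<delta>M) * (norm (x (Suc k) - z k))^2"
      using detQ cQ qv unfolding contraction_vec_def by (metis expectation_return_pmf)
    have zS: "(norm (z (Suc k) - xstar))^2 \<le> c2"
    proof -
      have "z (Suc k) - xstar = (x (Suc k) - xstar) - ((x (Suc k) - z k) - q)" using q(2) by simp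
      moreover have "(norm ((x (Suc k) - xstar) - ((x (Suc k) - z k) - q)))^2 \<le> c2"
      proof (rule contr_step[OF dM _ zk xb])
        show "(norm (x (Suc k) - z k - q))^2 \<le> (1 - \<delta>M) * (norm (x (Suc k) - xstar - (z k - xstar)))^2"
          using contrQ by simp
      qed
      ultimately show ?thesis by simp
    qed
    have Li: "(norm (L (Suc k) i - ?Ls i))^2 \<le> ca \<delta> * (norm (coeff (B i) (hess i (z k)) - ?Ls i))^2 + cb \<delta> * (norm (L k i - ?Ls i))^2"
      if i: "i < n" for i
    proof -
      let ?u = "coeff (B i) (hess i (z k)) - L k i"
      obtain c where c: "c \<in> set_pmf (C k i ?u)" "L (Suc k) i = L k i + 1 *\<^sub>R c"
        using run i unfolding BL1_run_def by blast
      obtain cC where cC: "\<forall>a. C k i a = return_pmf (cC a)" using detC i unfolding deterministic_def by blast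
      have cv: "c = cC ?u" using c(1) cC by simp
      have "(frob (?u - c))^2 \<le> (1 - \<delta>) * (frob ?u)^2"
        using detC i cC cv unfolding contraction_mat_def by (metis expectation_return_pmf)
      then have e: "(norm (?u - c))^2 \<le> (1 - \<delta>) * (norm ((coeff (B i) (hess i (z k)) - ?Ls i) - (L k i - ?Ls i)))^2"
        by (simp add: frob_eq_norm)
      have "L (Suc k) i - ?Ls i = (coeff (B i) (hess i (z k)) - ?Ls i) - (?u - c)" using c(2) by simp
      then show ?thesis using contr_lin[OF dd e] by simp
    qed
    have ai: "(norm (coeff (B i) (hess i (z k)) - ?Ls i))^2 \<le> (\<delta> / 4) / (6 / \<delta> - 7 / 2) * Hb" if i: "i < n" for i
    proof -
      have "norm (coeff (B i) (hess i (z k)) - ?Ls i) \<le> M1 * norm (z k - xstar)"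
        using Lip_M1[OF i] by (simp add: frob_eq_norm)
      then have "(norm (coeff (B i) (hess i (z k)) - ?Ls i))^2 \<le> (M1 * norm (z k - xstar))^2"
        by (intro power_mono) simp_all
      also have "\<dots> = M1^2 * (norm (z k - xstar))^2" by (simp add: power_mult_distrib)
      also have "\<dots> \<le> M1^2 * c2" using zk by (intro mult_left_mono) simp_all
      also have "\<dots> \<le> (\<delta> / 4) / (6 / \<delta> - 7 / 2) * Hb"
        unfolding Hbdef by (rule arith_ii2[OF dd dM NB Rpos M1pos c2b])
      finally show ?thesis .
    qed
    have HS: "Hcal n (L (Suc k)) ?Ls \<le> Hb"
    proof -
      have "Hcal n (L (Suc k)) ?Ls \<le> (1 / real n) * (\<Sum>i<n. ca \<delta> * ((\<delta> / 4) / (6 / \<delta> - 7 / 2) * Hb) + cb \<delta> * (norm (L k i - ?Ls i))^2)"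
        unfolding Hcal_def frob_eq_norm
      proof (intro mult_left_mono sum_mono)
        fix i assume "i \<in> {..<n}"
        then have i: "i < n" by simp
        show "(norm (L (Suc k) i - ?Ls i))^2 \<le> ca \<delta> * ((\<delta> / 4) / (6 / \<delta> - 7 / 2) * Hb) + cb \<delta> * (norm (L k i - ?Ls i))^2"
          using Li[OF i] mult_left_mono[OF ai[OF i] ca_nn[OF dd]] by linarith
      qed simp
      also have "\<dots> = ca \<delta> * ((\<delta> / 4) / (6 / \<delta> - 7 / 2) * Hb) + cb \<delta> * Hcal n (L k) ?Ls"
        unfolding Hcal_def frob_eq_norm using n_pos by (simp add: sum.distrib sum_distrib_left algebra_simps)
      also have "\<dots> \<le> ca \<delta> * ((\<delta> / 4) / (6 / \<delta> - 7 / 2) * Hb) + cb \<delta> * Hb"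
        using IHH cb_nn[OF dd] by (intro add_left_mono mult_left_mono) auto
      also have "\<dots> = (ca \<delta> * ((\<delta> / 4) / (6 / \<delta> - 7 / 2)) + cb \<delta>) * Hb" by (simp add: algebra_simps)
      also have "\<dots> \<le> 1 * Hb"
      proof (rule mult_right_mono[OF cacb[OF dd]])
        show "0 \<le> Hb" using H0 unfolding Hcal_def using n_pos
          by (meson divide_nonneg_nonneg mult_nonneg_nonneg order_trans sum_nonneg zero_le_power2 of_nat_0_le_iff zero_le_one)
      qed
      finally show ?thesis by simp
    qed
    show ?case using IHz zS HS le_Suc_eq by auto
  qed
  show ?thesis using inv[of k] by simp
qed

end

theorem theorem4p11:
  fixes n :: nat
    and f :: "nat \<Rightarrow> real^'d::finite \<Rightarrow> real"
    and grad :: "nat \<Rightarrow> real^'d \<Rightarrow> real^'d"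
    and hess :: "nat \<Rightarrow> real^'d \<Rightarrow> real^'d^'d"
    and B :: "nat \<Rightarrow> 'd \<Rightarrow> 'd \<Rightarrow> real^'d^'d"
    and \<mu> H H\<^sub>1 M\<^sub>1 M\<^sub>2 R :: real
    and xstar :: "real^'d"
  assumes n_pos: "n \<ge> 1"
    and mu_pos: "\<mu> > 0"
    and grad: "\<And>i x. i < n \<Longrightarrow> (f i has_derivative (\<lambda>v. grad i x \<bullet> v)) (at x)"
    and hess: "\<And>i x. i < n \<Longrightarrow> (grad i has_derivative (\<lambda>v. hess i x *v v)) (at x)"
    and strong: "strongly_convex \<mu> (\<lambda>x. (1 / real n) * (\<Sum>i<n. f i x))"
    and xstar_min: "\<And>y. (1 / real n) * (\<Sum>i<n. f i xstar) \<le> (1 / real n) * (\<Sum>i<n. f i y)"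
    and basis: "\<And>i. i < n \<Longrightarrow> is_mat_basis (B i)"
    and consts_pos: "H > 0" "M\<^sub>1 > 0" "M\<^sub>2 > 0" "R > 0"
    and Lip_H: "\<And>i x y. i < n \<Longrightarrow> spec_norm (hess i x - hess i y) \<le> H * norm (x - y)"
    and Lip_H1: "\<And>i x y. i < n \<Longrightarrow> frob (hess i x - hess i y) \<le> H\<^sub>1 * norm (x - y)"
    and Lip_M1: "\<And>i x y. i < n \<Longrightarrow>
                   frob (coeff (B i) (hess i x) - coeff (B i) (hess i y)) \<le> M\<^sub>1 * norm (x - y)"
    and Lip_M2: "\<And>i x y j l. i < n \<Longrightarrow>
                   \<bar>coeff (B i) (hess i x) $ j $ l - coeff (B i) (hess i y) $ j $ l\<bar> \<le> M\<^sub>2 * norm (x - y)"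
    and basis_R: "\<And>i j l. i < n \<Longrightarrow> frob (B i j l) \<le> R"
  shows
   "(\<forall>\<alpha> \<eta> p \<omega>\<^sub>M Q C x z w L \<xi> g.
       0 \<le> \<alpha> \<and> 0 < p \<and> p \<le> 1 \<and>
       (\<forall>k. unbiased_compressor \<omega>\<^sub>M (Q k)) \<and> 0 < \<eta> \<and> \<eta> \<le> 1 / (\<omega>\<^sub>M + 1) \<and>
       BL1_run n B grad hess \<mu> \<alpha> \<eta> p Q C x z w L \<xi> g \<and>
       (\<forall>j k. convex_comb_of (z k $ j) k (\<lambda>t. x t $ j)) \<and>
       (\<forall>i j l k. i < n \<longrightarrow>
          convex_comb_of (L k i $ j $ l) k (\<lambda>t. coeff (B i) (hess i (z t)) $ j $ l)) \<and>
       (norm (x 0 - xstar))^2 \<le> min (\<mu>^2 / (4 * real CARD('d)^2 * H^2))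
                                     (\<mu>^2 / (16 * real CARD('d)^4 * N_B n B * R^2 * M\<^sub>2^2))
     \<longrightarrow> (\<forall>k. (norm (z k - xstar))^2 \<le> real CARD('d) *
                   min (\<mu>^2 / (4 * real CARD('d)^2 * H^2))
                       (\<mu>^2 / (16 * real CARD('d)^4 * N_B n B * R^2 * M\<^sub>2^2))
              \<and> Hcal n (L k) (\<lambda>i. coeff (B i) (hess i xstar))
                  \<le> \<mu>^2 / (16 * real CARD('d) * N_B n B * R^2)))
    \<and>
    (\<forall>p \<delta>\<^sub>M \<delta> Q C x z w L \<xi> g.
       0 < p \<and> p \<le> 1 \<and>
       (\<forall>k. deterministic (Q k) \<and> contraction_vec \<delta>\<^sub>M (Q k)) \<and>
       (\<forall>k i. i < n \<longrightarrow> deterministic (C k i) \<and> contraction_mat \<delta> (C k i)) \<and>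
       BL1_run n B grad hess \<mu> 1 1 p Q C x z w L \<xi> g \<and>
       (norm (z 0 - xstar))^2 \<le>
          min ((\<delta>\<^sub>M / 4) * \<mu>^2 / (4 * H^2 * (6 / \<delta>\<^sub>M - 7 / 2)))
              ((\<delta> / 4) * (\<delta>\<^sub>M / 4) * \<mu>^2 /
                 (16 * N_B n B * R^2 * (6 / \<delta>\<^sub>M - 7 / 2) * (6 / \<delta> - 7 / 2) * M\<^sub>1^2)) \<and>
       Hcal n (L 0) (\<lambda>i. coeff (B i) (hess i xstar))
          \<le> (\<delta>\<^sub>M / 4) * \<mu>^2 / (16 * N_B n B * R^2 * (6 / \<delta>\<^sub>M - 7 / 2))
     \<longrightarrow> (\<forall>k. (norm (z k - xstar))^2 \<le>
                 min ((\<delta>\<^sub>M / 4) * \<mu>^2 / (4 * H^2 * (6 / \<delta>\<^sub>M - 7 / 2)))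
                     ((\<delta> / 4) * (\<delta>\<^sub>M / 4) * \<mu>^2 /
                        (16 * N_B n B * R^2 * (6 / \<delta>\<^sub>M - 7 / 2) * (6 / \<delta> - 7 / 2) * M\<^sub>1^2))
              \<and> Hcal n (L k) (\<lambda>i. coeff (B i) (hess i xstar))
                  \<le> (\<delta>\<^sub>M / 4) * \<mu>^2 / (16 * N_B n B * R^2 * (6 / \<delta>\<^sub>M - 7 / 2))))"
proof -
  have Hnn: "H \<ge> 0" using consts_pos(1) by simp
  have loc: "blc n f grad hess H \<mu> xstar"
    unfolding blc_def bls_def blc_axioms_def
    using n_pos grad hess Lip_H Hnn strong xstar_min mu_pos by (simp add: FF_def[abs_def])
  interpret blc n f grad hess H \<mu> xstar by (rule loc)
  show ?thesis
  proof (rule conjI)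
    show "\<forall>\<alpha> \<eta> p \<omega>\<^sub>M Q C x z w L \<xi> g.
       0 \<le> \<alpha> \<and> 0 < p \<and> p \<le> 1 \<and>
       (\<forall>k. unbiased_compressor \<omega>\<^sub>M (Q k)) \<and> 0 < \<eta> \<and> \<eta> \<le> 1 / (\<omega>\<^sub>M + 1) \<and>
       BL1_run n B grad hess \<mu> \<alpha> \<eta> p Q C x z w L \<xi> g \<and>
       (\<forall>j k. convex_comb_of (z k $ j) k (\<lambda>t. x t $ j)) \<and>
       (\<forall>i j l k. i < n \<longrightarrow>
          convex_comb_of (L k i $ j $ l) k (\<lambda>t. coeff (B i) (hess i (z t)) $ j $ l)) \<and>
       (norm (x 0 - xstar))^2 \<le> min (\<mu>^2 / (4 * real CARD('d)^2 * H^2))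
                                     (\<mu>^2 / (16 * real CARD('d)^4 * N_B n B * R^2 * M\<^sub>2^2))
     \<longrightarrow> (\<forall>k. (norm (z k - xstar))^2 \<le> real CARD('d) *
                   min (\<mu>^2 / (4 * real CARD('d)^2 * H^2))
                       (\<mu>^2 / (16 * real CARD('d)^4 * N_B n B * R^2 * M\<^sub>2^2))
              \<and> Hcal n (L k) (\<lambda>i. coeff (B i) (hess i xstar))
                  \<le> \<mu>^2 / (16 * real CARD('d) * N_B n B * R^2))"
      using part_i[OF basis consts_pos(4) consts_pos(3) consts_pos(1) Lip_M2 basis_R _ _ _ _ refl]
      by blast
    show "\<forall>p \<delta>\<^sub>M \<delta> Q C x z w L \<xi> g.
       0 < p \<and> p \<le> 1 \<and>
       (\<forall>k. deterministic (Q k) \<and> contraction_vec \<delta>\<^sub>M (Q k)) \<and>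
       (\<forall>k i. i < n \<longrightarrow> deterministic (C k i) \<and> contraction_mat \<delta> (C k i)) \<and>
       BL1_run n B grad hess \<mu> 1 1 p Q C x z w L \<xi> g \<and>
       (norm (z 0 - xstar))^2 \<le>
          min ((\<delta>\<^sub>M / 4) * \<mu>^2 / (4 * H^2 * (6 / \<delta>\<^sub>M - 7 / 2)))
              ((\<delta> / 4) * (\<delta>\<^sub>M / 4) * \<mu>^2 /
                 (16 * N_B n B * R^2 * (6 / \<delta>\<^sub>M - 7 / 2) * (6 / \<delta> - 7 / 2) * M\<^sub>1^2)) \<and>
       Hcal n (L 0) (\<lambda>i. coeff (B i) (hess i xstar))
          \<le> (\<delta>\<^sub>M / 4) * \<mu>^2 / (16 * N_B n B * R^2 * (6 / \<delta>\<^sub>M - 7 / 2))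
     \<longrightarrow> (\<forall>k. (norm (z k - xstar))^2 \<le>
                 min ((\<delta>\<^sub>M / 4) * \<mu>^2 / (4 * H^2 * (6 / \<delta>\<^sub>M - 7 / 2)))
                     ((\<delta> / 4) * (\<delta>\<^sub>M / 4) * \<mu>^2 /
                        (16 * N_B n B * R^2 * (6 / \<delta>\<^sub>M - 7 / 2) * (6 / \<delta> - 7 / 2) * M\<^sub>1^2))
              \<and> Hcal n (L k) (\<lambda>i. coeff (B i) (hess i xstar))
                  \<le> (\<delta>\<^sub>M / 4) * \<mu>^2 / (16 * N_B n B * R^2 * (6 / \<delta>\<^sub>M - 7 / 2)))"
      using part_ii[OF basis consts_pos(4) consts_pos(2) consts_pos(1) Lip_M1 basis_R _ _ _ _ _ refl refl]
      by blast
  qed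
qed

end
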